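(* For any non-negative real number $T$ and any integer $a$, \[P\left(\|X\|_T\leq p^a\right) = e^{-\sigma\alpha T p^{-ab}},\qquad\text{where } \|X\|_T=\sup_{0\le t\le T}|X_t| \text{ and } \alpha = 1-\frac{p^b-1}{p^{b+1}-1}.\]
   Context: Fix a prime $p$. $\mathbb Q_p$ is the field of $p$-adic numbers with absolute value $|\cdot|$, $\mu$ is the Haar measure on $\mathbb Q_p$ normalized so that $\mu(\mathbb Z_p)=1$ (write $dx$ for $d\mu(x)$). For $x\in\mathbb Q_p$ write $x=\sum_k a_x(k)p^k$ with digits $a_x(k)\in\{0,\dots,p-1\}$, set $\{x\}=\sum_{k<0}a_x(k)p^k$ and $\chi(x)=e^{2\pi i\{x\}}$. Fix positive reals $b$ (the exponent of the Vladimirov operator) and $\sigma$ (the diffusion constant). For $t>0$ let $\rho(t,x)=\int_{\mathbb Q_p}\chi(xy)e^{-\sigma t|y|^b}\,dy$, the fundamental solution of $\frac{d}{dt}f=-\sigma\Delta f$ where $\Delta$ is the Vladimirov operator with symbol $|\xi|^b$; it is a probability density. $P$ is the probability measure on the Skorokhod space $D([0,\infty):\mathbb Q_p)$ of càdlàg $\mathbb Q_p$-valued paths, concentrated on paths with $\omega(0)=0$, whose finite-dimensional distributions are: for $0=t_0<t_1<\dots<t_k$ and Borel $U_1,\dots,U_k$, $P(X_{t_1}\in U_1,\dots,X_{t_k}\in U_k)=\int_{U_1}\cdots\int_{U_k}\prod_{i=1}^k\rho(t_i-t_{i-1},x_i-x_{i-1})\,dx_k\cdots dx_1$ with $x_0=0$.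 Here $X_t(\omega)=\omega(t)$ ($p$-adic Brownian motion). *)

theory Defs
  imports "HOL-Probability.Probability"
begin

text \<open>p-adic numbers represented by their digit functions
  x = sum_k a_x(k) p^k with digits in {0..p-1}, finitely many nonzero digits at negative indices.\<close>

definition Qp :: "nat \<Rightarrow> (int \<Rightarrow> nat) set" where
  "Qp p = {d. (\<forall>k. d k < p) \<and> (\<exists>N. \<forall>k<N. d k = 0)}"

definition pzero :: "int \<Rightarrow> nat" where
  "pzero = (\<lambda>_. 0)"

definition ptrunc :: "nat \<Rightarrow> (int \<Rightarrow> nat) \<Rightarrow> int \<Rightarrow> real" where
  "ptrunc p x k = (\<Sum>j\<in>{j. j < k \<and> x j \<noteq> 0}. real (x j) * real p powi j)"

text \<open>k-th p-adic digit of a real number s in Z[1/p] determined modulo p^(k+1).\<close>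
definition pdigit :: "nat \<Rightarrow> real \<Rightarrow> int \<Rightarrow> nat" where
  "pdigit p s k = nat (\<lfloor>s / real p powi k\<rfloor> mod int p)"

definition pval :: "(int \<Rightarrow> nat) \<Rightarrow> int" where
  "pval x = (if x = pzero then 0 else (LEAST k. x k \<noteq> 0))"

definition padd :: "nat \<Rightarrow> (int \<Rightarrow> nat) \<Rightarrow> (int \<Rightarrow> nat) \<Rightarrow> (int \<Rightarrow> nat)" where
  "padd p x y = (\<lambda>k. pdigit p (ptrunc p x (k + 1) + ptrunc p y (k + 1)) k)"

definition pneg :: "nat \<Rightarrow> (int \<Rightarrow> nat) \<Rightarrow> (int \<Rightarrow> nat)" where
  "pneg p x = (\<lambda>k. pdigit p (- ptrunc p x (k + 1)) k)"

definition psub :: "nat \<Rightarrow> (int \<Rightarrow> nat) \<Rightarrow> (int \<Rightarrow> nat) \<Rightarrow> (int \<Rightarrow> nat)" where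
  "psub p x y = padd p x (pneg p y)"

text \<open>Product: digit k of xy is determined by the truncations at a sufficiently large level K.\<close>
definition pmul :: "nat \<Rightarrow> (int \<Rightarrow> nat) \<Rightarrow> (int \<Rightarrow> nat) \<Rightarrow> (int \<Rightarrow> nat)" where
  "pmul p x y = (\<lambda>k. let K = max (k + 1) 0 + max 0 (- pval x) + max 0 (- pval y)
                       in pdigit p (ptrunc p x K * ptrunc p y K) k)"

definition pabs :: "nat \<Rightarrow> (int \<Rightarrow> nat) \<Rightarrow> real" where
  "pabs p x = (if x = pzero then 0 else real p powi (- pval x))"

definition pdist :: "nat \<Rightarrow> (int \<Rightarrow> nat) \<Rightarrow> (int \<Rightarrow> nat) \<Rightarrow> real" where
  "pdist p x y = pabs p (psub p x y)"

definition pfrac :: "nat \<Rightarrow> (int \<Rightarrow> nat) \<Rightarrow> real" where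
  "pfrac p x = ptrunc p x 0"

definition pchi :: "nat \<Rightarrow> (int \<Rightarrow> nat) \<Rightarrow> complex" where
  "pchi p x = exp (2 * complex_of_real pi * \<i> * complex_of_real (pfrac p x))"

definition Zp :: "nat \<Rightarrow> (int \<Rightarrow> nat) set" where
  "Zp p = {x \<in> Qp p. \<forall>k<0. x k = 0}"

definition padic_open :: "nat \<Rightarrow> (int \<Rightarrow> nat) set \<Rightarrow> bool" where
  "padic_open p U \<longleftrightarrow> U \<subseteq> Qp p \<and>
     (\<forall>x\<in>U. \<exists>r>0. {y \<in> Qp p. pdist p y x < r} \<subseteq> U)"

definition padic_borel :: "nat \<Rightarrow> (int \<Rightarrow> nat) set set" where
  "padic_borel p = sigma_sets (Qp p) {U. padic_open p U}"

definition is_haar :: "nat \<Rightarrow> (int \<Rightarrow> nat) measure \<Rightarrow> bool" where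
  "is_haar p \<mu> \<longleftrightarrow> space \<mu> = Qp p \<and> sets \<mu> = padic_borel p \<and>
     (\<forall>a\<in>Qp p. \<forall>A\<in>sets \<mu>. emeasure \<mu> ((\<lambda>x. padd p a x) ` A) = emeasure \<mu> A) \<and>
     emeasure \<mu> (Zp p) = 1"

definition prho :: "(int \<Rightarrow> nat) measure \<Rightarrow> nat \<Rightarrow> real \<Rightarrow> real \<Rightarrow> real \<Rightarrow> (int \<Rightarrow> nat) \<Rightarrow> real" where
  "prho \<mu> p b \<sigma> t x = Re (\<integral>y. pchi p (pmul p x y) *
        complex_of_real (exp (- \<sigma> * t * pabs p y powr b)) \<partial>\<mu>)"

definition cadlag_paths :: "nat \<Rightarrow> (real \<Rightarrow> int \<Rightarrow> nat) set" where
  "cadlag_paths p = {\<omega>. (\<forall>t. t < 0 \<longrightarrow> \<omega> t = pzero) \<and> (\<forall>t\<ge>0. \<omega> t \<in> Qp p) \<and>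
     (\<forall>t\<ge>0. \<forall>e>0. \<exists>\<delta>>0. \<forall>s. t \<le> s \<and> s < t + \<delta> \<longrightarrow> pdist p (\<omega> s) (\<omega> t) < e) \<and>
     (\<forall>t>0. \<exists>L\<in>Qp p. \<forall>e>0. \<exists>\<delta>>0. \<forall>s. t - \<delta> < s \<and> s < t \<longrightarrow> pdist p (\<omega> s) L < e)}"

text \<open>Sigma-algebra on Skorokhod space generated by the coordinate maps
  (coincides with the Borel sigma-algebra of the Skorokhod topology).\<close>
definition skorokhod_sets :: "nat \<Rightarrow> (real \<Rightarrow> int \<Rightarrow> nat) set set" where
  "skorokhod_sets p = sigma_sets (cadlag_paths p)
     {{\<omega> \<in> cadlag_paths p. \<omega> t \<in> U} | t U. t \<ge> 0 \<and> U \<in> padic_borel p}"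

definition is_padic_BM :: "nat \<Rightarrow> real \<Rightarrow> real \<Rightarrow> (int \<Rightarrow> nat) measure \<Rightarrow>
    (real \<Rightarrow> int \<Rightarrow> nat) measure \<Rightarrow> bool" where
  "is_padic_BM p b \<sigma> \<mu> P \<longleftrightarrow> prob_space P \<and>
     space P = cadlag_paths p \<and> sets P = skorokhod_sets p \<and>
     (AE \<omega> in P. \<omega> 0 = pzero) \<and>
     (\<forall>(k::nat) (ts::nat \<Rightarrow> real) (U::nat \<Rightarrow> (int \<Rightarrow> nat) set).
        1 \<le> k \<and> 0 < ts 0 \<and> (\<forall>i. Suc i < k \<longrightarrow> ts i < ts (Suc i)) \<and>
        (\<forall>i<k. U i \<in> padic_borel p) \<longrightarrow>
        emeasure P {\<omega> \<in> space P. \<forall>i<k. \<omega> (ts i) \<in> U i} =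
        (\<integral>\<^sup>+ xs. indicator (PiE {..<k} U) xs *
            (\<Prod>i<k. ennreal (prho \<mu> p b \<sigma>
                 (ts i - (if i = 0 then 0 else ts (i - 1)))
                 (psub p (xs i) (if i = 0 then pzero else xs (i - 1)))))
          \<partial>(PiM {..<k} (\<lambda>_. \<mu>))))"

end

theory Submission
  imports Defs
begin


definition tr :: "nat \<Rightarrow> (int \<Rightarrow> nat) \<Rightarrow> int \<Rightarrow> int \<Rightarrow> real" where
  "tr p x L k = (\<Sum>j\<in>{L..<k}. real (x j) * real p powi j)"

definition pm :: "nat \<Rightarrow> real \<Rightarrow> int \<Rightarrow> bool" where
  "pm p r e \<longleftrightarrow> (\<exists>n::int. r = of_int n * real p powi e)"

definition agree :: "int \<Rightarrow> (int \<Rightarrow> nat) \<Rightarrow> (int \<Rightarrow> nat) \<Rightarrow> bool" where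
  "agree M x y \<longleftrightarrow> (\<forall>j<M. x j = y j)"

locale pp =
  fixes p :: nat
  assumes p2: "2 \<le> p"
begin

lemma P_pos: "0 < real p" using p2 by simp
lemma P_gt1: "1 < real p" using p2 by simp
lemma Ppow_pos: "0 < real p powi k" using P_pos by simp
lemma Ppow_nz: "real p powi k \<noteq> 0" using P_pos by simp

lemma Ppow_add: "real p powi (a + b) = real p powi a * real p powi b"
  by (rule power_int_add) (use P_pos in auto)

lemma Ppow_mono: "a \<le> b \<Longrightarrow> real p powi a \<le> real p powi b"
  using P_gt1 by (simp add: power_int_increasing)

lemma Ppow_strict: "a < b \<Longrightarrow> real p powi a < real p powi b"
  using P_gt1 by (simp add: power_int_strict_increasing)

lemma Ppow_le_iff: "real p powi a \<le> real p powi b \<longleftrightarrow> a \<le> b"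
  using Ppow_mono Ppow_strict by (meson linorder_not_le)

lemma Ppow_less_iff: "real p powi a < real p powi b \<longleftrightarrow> a < b"
  using Ppow_mono Ppow_strict by (meson linorder_not_le)

lemma Ppow_Suc: "real p powi (k + 1) = real p * real p powi k"
  using Ppow_add[of k 1] by simp

lemma Ppow_Suc'[simp]: "real p powi (1 + k) = real p * real p powi k"
  by (metis Ppow_Suc add.commute)

lemma floor_step:
  "\<lfloor>s / real p powi k\<rfloor> = int p * \<lfloor>s / real p powi (k+1)\<rfloor> + int (pdigit p s k)"
proof -
  have e: "s / real p powi (k+1) = (s / real p powi k) / real_of_int (int p)"
    unfolding Ppow_Suc by (simp add: divide_divide_eq_left mult.commute)
  have "\<lfloor>s / real p powi (k+1)\<rfloor> = \<lfloor>s / real p powi k\<rfloor> div int p"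
    unfolding e by (rule floor_divide_real_eq_div) simp
  moreover have "int (pdigit p s k) = \<lfloor>s / real p powi k\<rfloor> mod int p"
    unfolding pdigit_def using p2 by simp
  ultimately show ?thesis by simp
qed

lemma digit_exp:
  assumes "L \<le> k"
  shows "of_int \<lfloor>s / real p powi L\<rfloor> * real p powi L =
     (\<Sum>j\<in>{L..<k}. real (pdigit p s j) * real p powi j) + of_int \<lfloor>s / real p powi k\<rfloor> * real p powi k"
  using assms
proof (induction k rule: int_ge_induct)
  case base
  then show ?case by simp
next
  case (step k)
  have iv: "{L..<k+1} = insert k {L..<k}" using step by auto
  have "of_int \<lfloor>s / real p powi k\<rfloor> * real p powi k =
     real (pdigit p s k) * real p powi k + of_int \<lfloor>s / real p powi (k+1)\<rfloor> * real p powi (k+1)"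
    by (subst floor_step) (simp add: Ppow_Suc Ppow_Suc' algebra_simps)
  then show ?case using step iv by simp
qed

lemma pm_floor: "pm p r e \<Longrightarrow> of_int \<lfloor>r / real p powi e\<rfloor> * real p powi e = r"
  unfolding pm_def using Ppow_nz by auto

lemma pm_add: assumes "pm p r e" "pm p s e" shows "pm p (r + s) e"
proof -
  obtain n m where "r = of_int n * real p powi e" "s = of_int m * real p powi e"
    using assms unfolding pm_def by auto
  then show ?thesis unfolding pm_def by (intro exI[of _ "n + m"]) (simp add: distrib_right)
qed

lemma pm_diff: assumes "pm p r e" "pm p s e" shows "pm p (r - s) e"
proof -
  obtain n m where "r = of_int n * real p powi e" "s = of_int m * real p powi e"
    using assms unfolding pm_def by auto
  then show ?thesis unfolding pm_def by (intro exI[of _ "n - m"]) (simp add: left_diff_distrib)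
qed

lemma pm_neg: assumes "pm p r e" shows "pm p (- r) e"
proof -
  obtain n where "r = of_int n * real p powi e" using assms unfolding pm_def by auto
  then show ?thesis unfolding pm_def by (intro exI[of _ "- n"]) simp
qed

lemma pm_zero[simp]: "pm p 0 e"
  unfolding pm_def by (rule exI[of _ 0]) simp

lemma pm_mult: "pm p r e \<Longrightarrow> pm p s f \<Longrightarrow> pm p (r * s) (e + f)"
  unfolding pm_def
proof (elim exE)
  fix n m assume "r = of_int n * real p powi e" "s = of_int m * real p powi f"
  then show "\<exists>k::int. r * s = of_int k * real p powi (e + f)"
    by (intro exI[of _ "n*m"]) (simp add: Ppow_add)
qed

lemma pm_mono: assumes "e \<le> f" "pm p r f" shows "pm p r e"
proof -
  obtain n where n: "r = of_int n * real p powi f" using assms unfolding pm_def by auto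
  have "real p powi f = real p powi (f - e) * real p powi e" using Ppow_add[of "f-e" e] by simp
  also have "real p powi (f - e) = real p ^ nat (f - e)" using assms(1)
    by (simp add: power_int_def)
  finally show ?thesis unfolding pm_def n
    by (intro exI[of _ "n * int p ^ nat (f - e)"]) simp
qed

lemma pm_sum: "finite S \<Longrightarrow> (\<And>i. i \<in> S \<Longrightarrow> pm p (f i) e) \<Longrightarrow> pm p (\<Sum>i\<in>S. f i) e"
  by (induction S rule: finite_induct) (auto intro: pm_add)

lemma pm_pow: "pm p (real n * real p powi j) j"
  unfolding pm_def by (intro exI[of _ "int n"]) simp

lemma pm_int: "pm p r 0 \<Longrightarrow> r \<in> \<int>"
  unfolding pm_def by auto

lemma pdigit_shift:
  assumes "r - r' = of_int n * real p powi (k+1)"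
  shows "pdigit p r k = pdigit p r' k"
proof -
  have e: "r / real p powi k = r' / real p powi k + of_int (n * int p)"
    using assms Ppow_nz Ppow_Suc by (simp add: field_simps)
  have "\<lfloor>r / real p powi k\<rfloor> = \<lfloor>r' / real p powi k\<rfloor> + n * int p"
    unfolding e by (rule floor_add_int[symmetric])
  then show ?thesis unfolding pdigit_def by simp
qed

lemma pdigit_zero[simp]: "pdigit p 0 k = 0"
  unfolding pdigit_def by simp

lemma tr_empty: "k \<le> L \<Longrightarrow> tr p x L k = 0"
  unfolding tr_def by simp

lemma tr_split: "L \<le> m \<Longrightarrow> m \<le> k \<Longrightarrow> tr p x L k = tr p x L m + tr p x m k"
  unfolding tr_def
proof -
  assume "L \<le> m" "m \<le> k"
  then have "{L..<k} = {L..<m} \<union> {m..<k}" by auto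
  then show "(\<Sum>j\<in>{L..<k}. real (x j) * real p powi j) =
     (\<Sum>j\<in>{L..<m}. real (x j) * real p powi j) + (\<Sum>j\<in>{m..<k}. real (x j) * real p powi j)"
    by (simp add: sum.union_disjoint ivl_disj_int_two(3))
qed

lemma tr_Suc: "L \<le> k \<Longrightarrow> tr p x L (k+1) = tr p x L k + real (x k) * real p powi k"
proof -
  assume "L \<le> k"
  then have "{L..<k+1} = insert k {L..<k}" by auto
  then show ?thesis unfolding tr_def by simp
qed

lemma tr_nonneg: "0 \<le> tr p x L k"
  unfolding tr_def by (intro sum_nonneg) simp

lemma tr_upper:
  assumes "\<forall>j. x j < p" "L \<le> k"
  shows "tr p x L k \<le> real p powi k - real p powi L"
  using assms(2)
proof (induction k rule: int_ge_induct)
  case base then show ?case by (simp add: tr_empty)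
next
  case (step k)
  have "x k + 1 \<le> p" using assms by (simp add: Suc_le_eq)
  then have "real (x k) + 1 \<le> real p" by (metis of_nat_1 of_nat_add of_nat_le_iff)
  then have "real (x k) \<le> real p - 1" by simp
  then have "real (x k) * real p powi k \<le> (real p - 1) * real p powi k"
    using Ppow_pos by (intro mult_right_mono) auto
  then show ?case using step tr_Suc[OF step(1)] by (simp add: Ppow_Suc algebra_simps)
qed

lemma tr_less: assumes "\<forall>j. x j < p" shows "tr p x L k < real p powi k"
proof (cases "L \<le> k")
  case True
  then show ?thesis using tr_upper[OF assms True] Ppow_pos[of L] by simp
next
  case False
  then show ?thesis using tr_empty[of k L x] Ppow_pos[of k] by simp
qed

lemma pm_tr: "pm p (tr p x L k) L"
  unfolding tr_def
proof (rule pm_sum)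
  fix j assume "j \<in> {L..<k}"
  then show "pm p (real (x j) * real p powi j) L" using pm_mono pm_pow by auto
qed simp

lemma pdigit_tr:
  assumes "\<forall>j. x j < p" "L \<le> k"
  shows "pdigit p (tr p x L (k+1)) k = x k"
proof -
  have "tr p x L (k+1) / real p powi k = real (x k) + tr p x L k / real p powi k"
    using tr_Suc[OF assms(2)] Ppow_nz by (simp add: field_simps)
  moreover have "0 \<le> tr p x L k / real p powi k" "tr p x L k / real p powi k < 1"
    using tr_nonneg tr_less[OF assms(1)] Ppow_pos by (auto simp: divide_simps)
  ultimately have "\<lfloor>tr p x L (k+1) / real p powi k\<rfloor> = int (x k)"
    by (simp add: floor_eq_iff)
  then show ?thesis unfolding pdigit_def using assms(1) by simp
qed

lemma tr_zero_below: "\<forall>j<L. x j = 0 \<Longrightarrow> k \<le> L \<Longrightarrow> tr p x L' k = 0"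
  unfolding tr_def by (intro sum.neutral) auto

lemma tr_lower_irrel:
  assumes "\<forall>j<L. x j = 0" "L' \<le> L"
  shows "tr p x L' k = tr p x L k"
proof (cases "L \<le> k")
  case True
  then show ?thesis using tr_split[of L' L k x] assms tr_zero_below[OF assms(1), of L L'] by simp
next
  case False
  then show ?thesis using tr_zero_below[OF assms(1), of k L'] tr_empty[of k L] by simp
qed

lemma Qp_low: "x \<in> Qp p \<Longrightarrow> \<exists>L. \<forall>j<L. x j = 0"
  unfolding Qp_def by auto

lemma Qp_dig: "x \<in> Qp p \<Longrightarrow> x j < p"
  unfolding Qp_def by auto

lemma Qp_low2: assumes "x \<in> Qp p" "y \<in> Qp p"
  obtains L where "\<forall>j<L. x j = 0" "\<forall>j<L. y j = 0"
proof -
  obtain L1 where a: "\<forall>j<L1. x j = 0" using Qp_low[OF assms(1)] by (elim exE)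
  obtain L2 where b: "\<forall>j<L2. y j = 0" using Qp_low[OF assms(2)] by (elim exE)
  show ?thesis
  proof (rule that[of "min L1 L2"])
    show "\<forall>j<min L1 L2. x j = 0" using a by simp
    show "\<forall>j<min L1 L2. y j = 0" using b by simp
  qed
qed

lemma ptrunc_tr:
  assumes "\<forall>j<L. x j = 0"
  shows "ptrunc p x k = tr p x L k"
proof -
  have "{j. j < k \<and> x j \<noteq> 0} \<subseteq> {L..<k}" using assms by (auto simp: not_less)
  then have "(\<Sum>j\<in>{j. j < k \<and> x j \<noteq> 0}. real (x j) * real p powi j) =
      (\<Sum>j\<in>{L..<k}. real (x j) * real p powi j)"
    by (intro sum.mono_neutral_left) auto
  then show ?thesis unfolding ptrunc_def tr_def by simp
qed

lemma pdigit_ptrunc: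
  assumes "x \<in> Qp p"
  shows "pdigit p (ptrunc p x (k+1)) k = x k"
proof -
  obtain L where L: "\<forall>j<L. x j = 0" using Qp_low assms by blast
  show ?thesis
  proof (cases "L \<le> k")
    case True
    then show ?thesis using ptrunc_tr[OF L] pdigit_tr[of x L k] Qp_dig[OF assms] by simp
  next
    case False
    then show ?thesis using ptrunc_tr[OF L] tr_empty[of "k+1" L x] L by simp
  qed
qed

lemma padd_nocarry:
  assumes "x \<in> Qp p" "y \<in> Qp p" "\<forall>j. x j = 0 \<or> y j = 0"
  shows "padd p x y = (\<lambda>j. x j + y j)"
proof
  fix k
  obtain L where L: "\<forall>j<L. x j = 0" "\<forall>j<L. y j = 0" using Qp_low2 assms by blast
  let ?z = "\<lambda>j. x j + y j"
  have zq: "?z \<in> Qp p" unfolding Qp_def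
  proof (intro CollectI conjI allI exI[of _ L])
    fix j show "x j + y j < p" using assms(3)[rule_format, of j] Qp_dig[OF assms(1), of j] Qp_dig[OF assms(2), of j]
      by auto
  next
    fix j show "j < L \<longrightarrow> x j + y j = 0" using L by simp
  qed
  have zL: "\<forall>j<L. ?z j = 0" using L by simp
  have "ptrunc p x (k+1) + ptrunc p y (k+1) = ptrunc p ?z (k+1)"
    unfolding ptrunc_tr[OF L(1)] ptrunc_tr[OF L(2)] ptrunc_tr[OF zL]
    by (simp add: tr_def sum.distrib[symmetric] algebra_simps)
  then show "padd p x y k = ?z k" unfolding padd_def using pdigit_ptrunc[OF zq] by simp
qed

end


context pp begin

lemma pdigit_lt: "pdigit p s k < p"
  unfolding pdigit_def using p2
  by (simp add: nat_less_iff)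

lemma least_int:
  fixes Q :: "int \<Rightarrow> bool"
  assumes "Q j0" "\<forall>j<L. \<not> Q j"
  shows "\<exists>j. Q j \<and> (\<forall>i<j. \<not> Q i)"
proof -
  have j0L: "L \<le> j0" using assms by (meson not_le)
  let ?R = "\<lambda>n::nat. Q (L + int n)"
  have "?R (nat (j0 - L))" using assms j0L by simp
  then have R: "?R (LEAST n. ?R n)" by (rule LeastI)
  show ?thesis
  proof (intro exI conjI allI impI)
    show "Q (L + int (LEAST n. ?R n))" using R .
  next
    fix i assume i: "i < L + int (LEAST n. ?R n)"
    show "\<not> Q i"
    proof (cases "i < L")
      case True then show ?thesis using assms by simp
    next
      case False
      then have "nat (i - L) < (LEAST n. ?R n)" using i by linarith
      then have "\<not> ?R (nat (i - L))" by (rule not_less_Least)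
      then show ?thesis using False by simp
    qed
  qed
qed

lemma first_nonzero:
  assumes "y \<in> Qp p" "y \<noteq> pzero"
  shows "\<exists>j. y j \<noteq> 0 \<and> (\<forall>i<j. y i = 0)"
proof -
  obtain j0 where "y j0 \<noteq> 0" using assms(2) unfolding pzero_def by auto
  moreover obtain L where "\<forall>j<L. y j = 0" using Qp_low[OF assms(1)] by (elim exE)
  ultimately show ?thesis using least_int[of "\<lambda>j. y j \<noteq> 0" j0 L] by auto
qed

lemma pval_eq:
  assumes "y j \<noteq> 0" "\<forall>i<j. y i = 0"
  shows "y \<noteq> pzero" "pval y = j"
proof -
  show nz: "y \<noteq> pzero" using assms(1) unfolding pzero_def by auto
  have "(LEAST k. y k \<noteq> 0) = j"
  proof (rule Least_equality)
    show "y j \<noteq> 0" by (rule assms(1))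
  next
    fix k assume "y k \<noteq> 0" then show "j \<le> k" using assms(2) by (meson not_le)
  qed
  then show "pval y = j" using nz unfolding pval_def by simp
qed

lemma pabs_eq:
  assumes "y j \<noteq> 0" "\<forall>i<j. y i = 0"
  shows "pabs p y = real p powi (- j)"
  using pval_eq[OF assms] unfolding pabs_def by simp

lemma pabs_pzero[simp]: "pabs p pzero = 0"
  unfolding pabs_def by simp

lemma pabs_nonneg: "0 \<le> pabs p y"
  unfolding pabs_def using Ppow_pos by (simp add: less_imp_le)

lemma pabs_le_iff:
  assumes "y \<in> Qp p"
  shows "pabs p y \<le> real p powi (- M) \<longleftrightarrow> (\<forall>j<M. y j = 0)"
proof (cases "y = pzero")
  case True
  have "pabs p y = 0" using True by simp
  moreover have "\<forall>j<M. y j = 0" using True unfolding pzero_def by simp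
  ultimately show ?thesis using Ppow_pos[of "-M"] by simp
next
  case False
  then obtain j where j: "y j \<noteq> 0" "\<forall>i<j. y i = 0" using first_nonzero assms by blast
  have "pabs p y \<le> real p powi (- M) \<longleftrightarrow> M \<le> j"
    unfolding pabs_eq[OF j] Ppow_le_iff by simp
  also have "\<dots> \<longleftrightarrow> (\<forall>i<M. y i = 0)"
  proof
    assume "M \<le> j" then show "\<forall>i<M. y i = 0" using j by simp
  next
    assume "\<forall>i<M. y i = 0" then show "M \<le> j" using j(1) by (meson not_le)
  qed
  finally show ?thesis .
qed

lemma pneg_Qp:
  assumes "c \<in> Qp p"
  shows "pneg p c \<in> Qp p"
proof -
  obtain L where L: "\<forall>j<L. c j = 0" using Qp_low[OF assms] by (elim exE)
  have "\<forall>j<L. pneg p c j = 0"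
  proof (intro allI impI)
    fix j assume "j < L"
    then have "ptrunc p c (j+1) = 0" using ptrunc_tr[OF L] tr_zero_below[OF L] by simp
    then show "pneg p c j = 0" unfolding pneg_def by simp
  qed
  then show ?thesis unfolding Qp_def pneg_def using pdigit_lt by auto
qed

lemma pneg_low:
  assumes "\<forall>j<L. c j = 0"
  shows "\<forall>j<L. pneg p c j = 0"
proof (intro allI impI)
  fix j assume "j < L"
  then have "ptrunc p c (j+1) = 0" using ptrunc_tr[OF assms] tr_zero_below[OF assms] by simp
  then show "pneg p c j = 0" unfolding pneg_def by simp
qed

lemma ptrunc_pneg:
  assumes "c \<in> Qp p"
  shows "\<exists>n::int. ptrunc p (pneg p c) (k+1) + ptrunc p c (k+1) = of_int n * real p powi (k+1)"
proof -
  obtain L where L: "\<forall>j<L. c j = 0" using Qp_low[OF assms] by (elim exE)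
  have L': "\<forall>j<L. pneg p c j = 0" using pneg_low[OF L] .
  show ?thesis
  proof (cases "L \<le> k")
    case False
    then have "ptrunc p (pneg p c) (k+1) = 0" "ptrunc p c (k+1) = 0"
      using ptrunc_tr[OF L] ptrunc_tr[OF L'] tr_zero_below[OF L] tr_zero_below[OF L'] by auto
    then show ?thesis by (intro exI[of _ 0]) simp
  next
    case True
    define s where "s = - tr p c L (k+1)"
    have "ptrunc p (pneg p c) (k+1) = (\<Sum>j\<in>{L..<k+1}. real (pneg p c j) * real p powi j)"
      unfolding ptrunc_tr[OF L'] tr_def by simp
    also have "\<dots> = (\<Sum>j\<in>{L..<k+1}. real (pdigit p s j) * real p powi j)"
    proof (rule sum.cong[OF refl])
      fix j assume j: "j \<in> {L..<k+1}"
      have "tr p c L (k+1) = tr p c L (j+1) + tr p c (j+1) (k+1)"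
        using j by (intro tr_split) auto
      moreover obtain n where "tr p c (j+1) (k+1) = of_int n * real p powi (j+1)"
        using pm_tr[of c "j+1" "k+1"] unfolding pm_def by auto
      ultimately have "(- ptrunc p c (j+1)) - s = of_int n * real p powi (j+1)"
        unfolding s_def ptrunc_tr[OF L] by simp
      then have "pdigit p (- ptrunc p c (j+1)) j = pdigit p s j" by (rule pdigit_shift)
      then show "real (pneg p c j) * real p powi j = real (pdigit p s j) * real p powi j"
        unfolding pneg_def by simp
    qed
    also have "\<dots> = of_int \<lfloor>s / real p powi L\<rfloor> * real p powi L
        - of_int \<lfloor>s / real p powi (k+1)\<rfloor> * real p powi (k+1)"
      using digit_exp[of L "k+1" s] True by simp
    also have "of_int \<lfloor>s / real p powi L\<rfloor> * real p powi L = s"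
      unfolding s_def by (intro pm_floor pm_neg pm_tr)
    finally show ?thesis unfolding s_def ptrunc_tr[OF L]
      by (intro exI[of _ "- \<lfloor>s / real p powi (k+1)\<rfloor>"]) (simp add: s_def)
  qed
qed

lemma psub_digit:
  assumes "x \<in> Qp p" "c \<in> Qp p"
  shows "psub p x c k = pdigit p (ptrunc p x (k+1) - ptrunc p c (k+1)) k"
proof -
  obtain n where n: "ptrunc p (pneg p c) (k+1) + ptrunc p c (k+1) = of_int n * real p powi (k+1)"
    using ptrunc_pneg[OF assms(2)] by auto
  have "(ptrunc p x (k+1) + ptrunc p (pneg p c) (k+1)) - (ptrunc p x (k+1) - ptrunc p c (k+1))
     = of_int n * real p powi (k+1)" using n by simp
  then show ?thesis unfolding psub_def padd_def by (rule pdigit_shift)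
qed

lemma ptrunc_agree:
  assumes "x \<in> Qp p" "c \<in> Qp p" "\<forall>j<k. x j = c j"
  shows "ptrunc p x k = ptrunc p c k"
proof -
  obtain L where L: "\<forall>j<L. x j = 0" "\<forall>j<L. c j = 0" using Qp_low2[OF assms(1) assms(2)] by metis
  show ?thesis unfolding ptrunc_tr[OF L(1)] ptrunc_tr[OF L(2)] tr_def
    using assms(3) by (intro sum.cong) auto
qed

lemma psub_agree_zero:
  assumes "x \<in> Qp p" "c \<in> Qp p" "\<forall>j<k+1. x j = c j"
  shows "psub p x c k = 0"
  unfolding psub_digit[OF assms(1,2)] ptrunc_agree[OF assms] by simp

lemma psub_first_diff:
  assumes "x \<in> Qp p" "c \<in> Qp p" "\<forall>j<k. x j = c j" "x k \<noteq> c k"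
  shows "psub p x c k \<noteq> 0"
proof -
  obtain L where L: "\<forall>j<L. x j = 0" "\<forall>j<L. c j = 0" using Qp_low2[OF assms(1) assms(2)] by metis
  have Lk: "L \<le> k"
  proof (rule ccontr)
    assume "\<not> L \<le> k" then have "k < L" by simp
    then show False using L assms(4) by simp
  qed
  have eq: "tr p x L k = tr p c L k" unfolding tr_def using assms(3) by (intro sum.cong) auto
  have "ptrunc p x (k+1) - ptrunc p c (k+1) = (real (x k) - real (c k)) * real p powi k"
    unfolding ptrunc_tr[OF L(1)] ptrunc_tr[OF L(2)] tr_Suc[OF Lk] eq by (simp add: algebra_simps)
  then have "(ptrunc p x (k+1) - ptrunc p c (k+1)) / real p powi k = of_int (int (x k) - int (c k))"
    using Ppow_nz by simp
  then have fl: "\<lfloor>(ptrunc p x (k+1) - ptrunc p c (k+1)) / real p powi k\<rfloor> = int (x k) - int (c k)"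
    by (metis floor_of_int)
  have lt: "x k < p" "c k < p" using Qp_dig assms by auto
  have "(int (x k) - int (c k)) mod int p \<noteq> 0"
  proof
    assume "(int (x k) - int (c k)) mod int p = 0"
    then have "int p dvd (int (x k) - int (c k))" by (simp add: mod_eq_0_iff_dvd)
    moreover have "int (x k) - int (c k) \<noteq> 0" using assms(4) by simp
    ultimately have "\<bar>int p\<bar> \<le> \<bar>int (x k) - int (c k)\<bar>" by (rule dvd_imp_le_int[rotated])
    then show False using lt by linarith
  qed
  moreover have "0 \<le> (int (x k) - int (c k)) mod int p" using p2 by simp
  ultimately show ?thesis unfolding psub_digit[OF assms(1,2)] pdigit_def fl by simp
qed

lemma first_diff:
  assumes "x \<in> Qp p" "c \<in> Qp p" "x \<noteq> c"
  shows "\<exists>j. x j \<noteq> c j \<and> (\<forall>i<j. x i = c i)"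
proof -
  obtain j0 where "x j0 \<noteq> c j0" using assms(3) by auto
  moreover obtain L where "\<forall>j<L. x j = 0" "\<forall>j<L. c j = 0" using Qp_low2[OF assms(1) assms(2)] by metis
  ultimately show ?thesis using least_int[of "\<lambda>j. x j \<noteq> c j" j0 L] by auto
qed

lemma psub_self: assumes "x \<in> Qp p" shows "psub p x x = pzero"
  using psub_agree_zero[OF assms assms] unfolding pzero_def by auto

lemma pdist_self: "x \<in> Qp p \<Longrightarrow> pdist p x x = 0"
  unfolding pdist_def using psub_self by simp

lemma pdist_first_diff:
  assumes "x \<in> Qp p" "c \<in> Qp p" "x j \<noteq> c j" "\<forall>i<j. x i = c i"
  shows "psub p x c \<noteq> pzero" "pval (psub p x c) = j" "pdist p x c = real p powi (- j)"
proof -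
  have a: "psub p x c j \<noteq> 0" using psub_first_diff assms by blast
  have b: "\<forall>i<j. psub p x c i = 0" using psub_agree_zero assms by auto
  show "psub p x c \<noteq> pzero" "pval (psub p x c) = j" using pval_eq[OF a b] by auto
  show "pdist p x c = real p powi (- j)" unfolding pdist_def using pabs_eq[OF a b] .
qed

lemma psub_eq_pzero_iff:
  assumes "x \<in> Qp p" "c \<in> Qp p"
  shows "psub p x c = pzero \<longleftrightarrow> x = c"
  using first_diff[OF assms] pdist_first_diff[OF assms] psub_self[OF assms(1)] by metis

lemma pdist_le_iff:
  assumes "x \<in> Qp p" "c \<in> Qp p"
  shows "pdist p x c \<le> real p powi (- M) \<longleftrightarrow> agree M x c"
proof (cases "x = c")
  case True
  then show ?thesis using pdist_self[OF assms(1)] Ppow_pos[of "-M"] unfolding agree_def by simp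
next
  case False
  then obtain j where j: "x j \<noteq> c j" "\<forall>i<j. x i = c i" using first_diff assms by blast
  have "pdist p x c \<le> real p powi (- M) \<longleftrightarrow> M \<le> j"
    unfolding pdist_first_diff(3)[OF assms j] Ppow_le_iff by simp
  also have "\<dots> \<longleftrightarrow> agree M x c" unfolding agree_def
  proof
    assume "M \<le> j" then show "\<forall>i<M. x i = c i" using j by simp
  next
    assume "\<forall>i<M. x i = c i" then show "M \<le> j" using j(1) by (meson not_le)
  qed
  finally show ?thesis .
qed

lemma pdist_less_agree:
  assumes "x \<in> Qp p" "c \<in> Qp p" "pdist p x c < real p powi (- (M - 1))"
  shows "agree M x c"
proof (cases "x = c")
  case True then show ?thesis unfolding agree_def by simp
next
  case False
  then obtain j where j: "x j \<noteq> c j" "\<forall>i<j. x i = c i" using first_diff assms by blast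
  have "M \<le> j" using assms(3) unfolding pdist_first_diff(3)[OF assms(1,2) j] Ppow_less_iff by simp
  then show ?thesis unfolding agree_def using j by auto
qed

lemma agree_pabs:
  assumes "y \<in> Qp p" "x \<in> Qp p" "agree M y x"
  shows "pabs p y \<le> max (pabs p x) (real p powi (- M))"
proof (cases "\<forall>j<M. x j = 0")
  case True
  then have "\<forall>j<M. y j = 0" using assms(3) unfolding agree_def by simp
  then have "pabs p y \<le> real p powi (- M)" using pabs_le_iff[OF assms(1), of M] by blast
  then show ?thesis by (simp add: le_max_iff_disj)
next
  case False
  then have xnz: "x \<noteq> pzero" unfolding pzero_def by auto
  obtain j where j: "x j \<noteq> 0" "\<forall>i<j. x i = 0" using first_nonzero[OF assms(2) xnz] by blast
  have jM: "j < M" using False j by (meson not_le order_less_le_trans)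
  have "y j \<noteq> 0" "\<forall>i<j. y i = 0" using j jM assms(3) unfolding agree_def by auto
  then have "pabs p y = pabs p x" using pabs_eq j by metis
  then show ?thesis by simp
qed

end


definition cyl :: "nat \<Rightarrow> (int \<Rightarrow> nat) \<Rightarrow> int \<Rightarrow> (int \<Rightarrow> nat) set" where
  "cyl p c M = {y \<in> Qp p. agree M y c}"

context pp begin

lemma agree_trans: "agree M x y \<Longrightarrow> agree M y z \<Longrightarrow> agree M x z"
  unfolding agree_def by simp

lemma agree_sym: "agree M x y \<Longrightarrow> agree M y x"
  unfolding agree_def by simp

lemma agree_mono: "agree M x y \<Longrightarrow> N \<le> M \<Longrightarrow> agree N x y"
  unfolding agree_def by simp

lemma open_borel:
  assumes "U \<subseteq> Qp p" "\<forall>x\<in>U. \<exists>M. cyl p x M \<subseteq> U"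
  shows "U \<in> padic_borel p"
proof -
  have "padic_open p U" unfolding padic_open_def
  proof (intro conjI ballI)
    show "U \<subseteq> Qp p" by fact
    fix x assume x: "x \<in> U"
    then obtain M where M: "cyl p x M \<subseteq> U" using assms(2) by blast
    have xq: "x \<in> Qp p" using x assms(1) by auto
    show "\<exists>r>0. {y \<in> Qp p. pdist p y x < r} \<subseteq> U"
    proof (intro exI[of _ "real p powi (- (M - 1))"] conjI)
      show "0 < real p powi (- (M - 1))" by (rule Ppow_pos)
      show "{y \<in> Qp p. pdist p y x < real p powi (- (M - 1))} \<subseteq> U"
        using M pdist_less_agree[OF _ xq] unfolding cyl_def by blast
    qed
  qed
  then show ?thesis unfolding padic_borel_def by (intro sigma_sets.Basic) simp
qed

lemma cyl_borel[simp]: "cyl p c M \<in> padic_borel p"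
  by (rule open_borel) (auto simp: cyl_def intro: agree_trans)

lemma digit_borel: "{y \<in> Qp p. y j = e} \<in> padic_borel p"
  by (rule open_borel) (auto simp: cyl_def agree_def intro!: exI[of _ "j+1"])

lemma borel_sub: assumes "A \<in> padic_borel p" shows "A \<subseteq> Qp p"
  by (rule sigma_sets_into_sp[OF _ assms[unfolded padic_borel_def]]) (auto simp: padic_open_def)

lemma trunc_Qp:
  assumes "c \<in> Qp p"
  shows "(\<lambda>j. if j < M then c j else 0) \<in> Qp p"
proof -
  obtain L where L: "\<forall>j<L. c j = 0" using Qp_low[OF assms] by (elim exE)
  show ?thesis unfolding Qp_def using Qp_dig[OF assms] L p2 by (auto intro!: exI[of _ L])
qed

lemma cyl_trunc: "cyl p c M = cyl p (\<lambda>j. if j < M then c j else 0) M"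
  unfolding cyl_def agree_def by auto

lemma pzero_Qp: "pzero \<in> Qp p"
  unfolding Qp_def pzero_def using p2 by auto

lemma cyl_translate:
  assumes d: "d \<in> Qp p" "\<forall>j\<ge>M. d j = 0"
  shows "cyl p d M = padd p d ` cyl p pzero M"
proof
  show "padd p d ` cyl p pzero M \<subseteq> cyl p d M"
  proof
    fix x assume "x \<in> padd p d ` cyl p pzero M"
    then obtain y where y: "y \<in> cyl p pzero M" "x = padd p d y" by auto
    have yq: "y \<in> Qp p" and y0: "\<forall>j<M. y j = 0" using y unfolding cyl_def agree_def pzero_def by auto
    have disj: "\<forall>j. d j = 0 \<or> y j = 0" using d(2) y0 by (meson not_le)
    have x: "x = (\<lambda>j. d j + y j)" using padd_nocarry[OF d(1) yq disj] y by simp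
    obtain L where L: "\<forall>j<L. d j = 0" "\<forall>j<L. y j = 0" using Qp_low2[OF d(1) yq] by metis
    have "x \<in> Qp p" unfolding x Qp_def
    proof (intro CollectI conjI allI exI[of _ L])
      fix j show "d j + y j < p" using disj[rule_format, of j] Qp_dig[OF d(1), of j] Qp_dig[OF yq, of j]
        by auto
    next
      fix j show "j < L \<longrightarrow> d j + y j = 0" using L by simp
    qed
    moreover have "agree M x d" unfolding agree_def x using y0 by simp
    ultimately show "x \<in> cyl p d M" unfolding cyl_def by simp
  qed
next
  show "cyl p d M \<subseteq> padd p d ` cyl p pzero M"
  proof
    fix x assume x: "x \<in> cyl p d M"
    then have xq: "x \<in> Qp p" and xa: "\<forall>j<M. x j = d j" unfolding cyl_def agree_def by auto
    define y where "y = (\<lambda>j. if j < M then 0 else x j)"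
    have yq: "y \<in> Qp p" unfolding Qp_def y_def using Qp_dig[OF xq] p2 by (auto intro!: exI[of _ M])
    have y0: "\<forall>j<M. y j = 0" unfolding y_def by simp
    have disj: "\<forall>j. d j = 0 \<or> y j = 0" using d(2) y0 by (meson not_le)
    have "padd p d y = (\<lambda>j. d j + y j)" using padd_nocarry[OF d(1) yq disj] .
    also have "\<dots> = x" unfolding y_def using xa d(2) by (auto simp: not_less)
    finally have "x = padd p d y" by simp
    moreover have "y \<in> cyl p pzero M" unfolding cyl_def agree_def pzero_def using yq y0 by simp
    ultimately show "x \<in> padd p d ` cyl p pzero M" by blast
  qed
qed

lemma cyl_mono: "N \<le> M \<Longrightarrow> cyl p c M \<subseteq> cyl p c N"
  unfolding cyl_def agree_def by auto

lemma cyl_sub: "x \<in> cyl p c M \<Longrightarrow> N \<ge> M \<Longrightarrow> cyl p x N \<subseteq> cyl p c M"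
  unfolding cyl_def agree_def by auto

lemma cyl_same: "x \<in> cyl p c M \<Longrightarrow> cyl p x M = cyl p c M"
  unfolding cyl_def agree_def by auto

lemma cyl_split:
  "cyl p c M = (\<Union>e\<in>{..<p}. cyl p (c(M := e)) (M+1))"
proof
  show "cyl p c M \<subseteq> (\<Union>e\<in>{..<p}. cyl p (c(M := e)) (M+1))"
  proof
    fix y assume y: "y \<in> cyl p c M"
    then have "y M < p" unfolding cyl_def using Qp_dig by auto
    moreover have "y \<in> cyl p (c(M := y M)) (M+1)" using y unfolding cyl_def agree_def by auto
    ultimately show "y \<in> (\<Union>e\<in>{..<p}. cyl p (c(M := e)) (M+1))" by blast
  qed
next
  show "(\<Union>e\<in>{..<p}. cyl p (c(M := e)) (M+1)) \<subseteq> cyl p c M"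
    unfolding cyl_def agree_def by auto
qed

lemma cyl_split_disj: "disjoint_family_on (\<lambda>e. cyl p (c(M := e)) (M+1)) S"
  unfolding disjoint_family_on_def cyl_def agree_def by auto

end

locale haar = pp +
  fixes \<mu> :: "(int \<Rightarrow> nat) measure"
  assumes haar: "is_haar p \<mu>"
begin

lemma space_mu[simp]: "space \<mu> = Qp p" using haar unfolding is_haar_def by simp
lemma sets_mu[simp]: "sets \<mu> = padic_borel p" using haar unfolding is_haar_def by simp
lemma translate: "a \<in> Qp p \<Longrightarrow> A \<in> sets \<mu> \<Longrightarrow> emeasure \<mu> (padd p a ` A) = emeasure \<mu> A"
  using haar unfolding is_haar_def by blast
lemma Zp_one: "emeasure \<mu> (Zp p) = 1" using haar unfolding is_haar_def by blast

lemma cyl_sets[measurable]: "cyl p c M \<in> sets \<mu>" using cyl_borel by simp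

lemma cyl_meas_same: assumes "c \<in> Qp p" shows "emeasure \<mu> (cyl p c M) = emeasure \<mu> (cyl p pzero M)"
proof -
  let ?d = "\<lambda>j. if j < M then c j else 0"
  have "cyl p c M = padd p ?d ` cyl p pzero M"
    unfolding cyl_trunc[of c] by (rule cyl_translate) (auto intro: trunc_Qp[OF assms])
  then show ?thesis using translate[OF trunc_Qp[OF assms, of M] cyl_sets] by simp
qed

lemma cyl0_step: "emeasure \<mu> (cyl p pzero M) = of_nat p * emeasure \<mu> (cyl p pzero (M+1))"
proof -
  have "emeasure \<mu> (cyl p pzero M) = emeasure \<mu> (\<Union>e\<in>{..<p}. cyl p (pzero(M := e)) (M+1))"
    using cyl_split[of pzero M] by simp
  also have "\<dots> = (\<Sum>e\<in>{..<p}. emeasure \<mu> (cyl p (pzero(M := e)) (M+1)))"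
    by (rule sum_emeasure[symmetric]) (auto intro: cyl_split_disj)
  also have "\<dots> = (\<Sum>e\<in>{..<p}. emeasure \<mu> (cyl p pzero (M+1)))"
  proof (rule sum.cong[OF refl])
    fix e assume "e \<in> {..<p}"
    then have "pzero(M := e) \<in> Qp p" unfolding Qp_def pzero_def using p2 by (auto intro!: exI[of _ M])
    then show "emeasure \<mu> (cyl p (pzero(M := e)) (M+1)) = emeasure \<mu> (cyl p pzero (M+1))"
      by (rule cyl_meas_same)
  qed
  finally show ?thesis by simp
qed

lemma cyl0_zero: "cyl p pzero 0 = Zp p"
  unfolding cyl_def Zp_def agree_def pzero_def by auto

lemma cyl0_meas: "emeasure \<mu> (cyl p pzero M) = ennreal (real p powi (- M))"
proof (induction M rule: int_induct[where k=0])
  case base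
  then show ?case using Zp_one cyl0_zero by simp
next
  case (step1 i)
  have "of_nat p * emeasure \<mu> (cyl p pzero (i+1)) = of_nat p * ennreal (real p powi (- (i + 1)))"
  proof -
    have "of_nat p * ennreal (real p powi (- (i + 1))) = ennreal (real p * real p powi (- (i + 1)))"
      by (simp add: ennreal_mult ennreal_of_nat_eq_real_of_nat Ppow_pos less_imp_le)
    also have "real p * real p powi (- (i + 1)) = real p powi (- i)"
      using Ppow_Suc[of "-(i+1)"] by simp
    finally show ?thesis using cyl0_step[of i] step1 by simp
  qed
  then show ?case using p2 by (subst (asm) ennreal_mult_cancel_left) auto
next
  case (step2 i)
  have "emeasure \<mu> (cyl p pzero (i - 1)) = of_nat p * ennreal (real p powi (- i))"
    using cyl0_step[of "i-1"] step2 by simp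
  also have "\<dots> = ennreal (real p * real p powi (- i))"
    by (simp add: ennreal_mult ennreal_of_nat_eq_real_of_nat Ppow_pos less_imp_le)
  also have "real p * real p powi (- i) = real p powi (- (i - 1))"
    using Ppow_Suc[of "-i"] by simp
  finally show ?case .
qed

lemma cyl_meas: "c \<in> Qp p \<Longrightarrow> emeasure \<mu> (cyl p c M) = ennreal (real p powi (- M))"
  using cyl_meas_same cyl0_meas by simp

lemma cyl_finite: "emeasure \<mu> (cyl p c M) < \<infinity>"
proof -
  have "cyl p c M \<subseteq> cyl p (\<lambda>j. if j < M then c j else 0) M" by (simp add: cyl_trunc[symmetric])
  have "emeasure \<mu> (cyl p c M) = emeasure \<mu> (cyl p (\<lambda>j. if j < M then c j else 0) M)"
    by (simp add: cyl_trunc[symmetric])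
  moreover have "cyl p (\<lambda>j. if j < M then c j else 0) M = {} \<or> (\<lambda>j. if j < M then c j else 0) \<in> Qp p \<or>
     (\<exists>x. x \<in> cyl p (\<lambda>j. if j < M then c j else 0) M)" by auto
  ultimately show ?thesis
  proof -
    show ?thesis
    proof (cases "cyl p c M = {}")
      case True then show ?thesis by simp
    next
      case False
      then obtain x where x: "x \<in> cyl p c M" by auto
      then have "cyl p c M = cyl p x M" using cyl_same by metis
      moreover have "x \<in> Qp p" using x unfolding cyl_def by simp
      ultimately show ?thesis using cyl_meas by simp
    qed
  qed
qed

lemma singleton_sets: "c \<in> Qp p \<Longrightarrow> {c} \<in> sets \<mu>"
proof -
  assume c: "c \<in> Qp p"
  have "{c} = (\<Inter>n::nat. cyl p c (int n))"
  proof
    show "{c} \<subseteq> (\<Inter>n::nat. cyl p c (int n))" using c unfolding cyl_def agree_def by auto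
  next
    show "(\<Inter>n::nat. cyl p c (int n)) \<subseteq> {c}"
    proof
      fix y assume y: "y \<in> (\<Inter>n::nat. cyl p c (int n))"
      have "y j = c j" for j
      proof -
        have "y \<in> cyl p c (int (nat (j+1)))" using y by blast
        then show ?thesis unfolding cyl_def agree_def by auto
      qed
      then show "y \<in> {c}" by auto
    qed
  qed
  also have "\<dots> \<in> sets \<mu>" by (intro sets.countable_INT) auto
  finally show ?thesis .
qed

lemma singleton_null: assumes "c \<in> Qp p" shows "{c} \<in> null_sets \<mu>"
proof -
  have *: "emeasure \<mu> {c} \<le> ennreal e" if e: "0 < e" for e
  proof -
    obtain n where n: "(1 / real p) ^ n < e" using real_arch_pow_inv[OF e, of "1 / real p"] P_gt1 by auto
    have "emeasure \<mu> {c} \<le> emeasure \<mu> (cyl p c (int n))"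
    proof (rule emeasure_mono)
      show "{c} \<subseteq> cyl p c (int n)" using assms by (auto simp: cyl_def agree_def)
    qed (rule cyl_sets)
    also have "\<dots> = ennreal ((1 / real p) ^ n)" using cyl_meas[OF assms]
      by (simp add: power_int_minus power_one_over inverse_eq_divide)
    also have "\<dots> \<le> ennreal e" using n by (intro ennreal_leI) simp
    finally show ?thesis .
  qed
  have "emeasure \<mu> {c} \<le> 0"
  proof (rule ennreal_le_epsilon)
    fix e :: real assume "0 < e" then show "emeasure \<mu> {c} \<le> 0 + ennreal e" using * by simp
  qed
  then have "emeasure \<mu> {c} = 0" by simp
  then show ?thesis using singleton_sets[OF assms] by (simp add: null_sets_def)
qed

lemma sigma_finite: "sigma_finite_measure \<mu>"
proof (rule sigma_finite_measure.intro)
  show "\<exists>A. countable A \<and> A \<subseteq> sets \<mu> \<and> \<Union> A = space \<mu> \<and> (\<forall>a\<in>A. emeasure \<mu> a \<noteq> \<infinity>)"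
  proof (intro exI[of _ "range (\<lambda>n::nat. cyl p pzero (- int n))"] conjI)
    show "\<Union> (range (\<lambda>n::nat. cyl p pzero (- int n))) = space \<mu>"
    proof
      show "\<Union> (range (\<lambda>n::nat. cyl p pzero (- int n))) \<subseteq> space \<mu>" unfolding cyl_def by auto
      show "space \<mu> \<subseteq> \<Union> (range (\<lambda>n::nat. cyl p pzero (- int n)))"
      proof
        fix x assume "x \<in> space \<mu>"
        then have xq: "x \<in> Qp p" by simp
        obtain L where L: "\<forall>j<L. x j = 0" using Qp_low[OF xq] by (elim exE)
        have "x \<in> cyl p pzero (- int (nat (- L)))"
          using xq L unfolding cyl_def agree_def pzero_def by auto
        then show "x \<in> \<Union> (range (\<lambda>n::nat. cyl p pzero (- int n)))" by blast
      qed
    qed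
  qed (use cyl_finite in \<open>auto simp: less_top\<close>)
qed

end


definition ech :: "real \<Rightarrow> complex" where
  "ech r = exp (2 * complex_of_real pi * \<i> * complex_of_real r)"

lemma ech_add: "ech (a + b) = ech a * ech b"
  unfolding ech_def by (simp add: distrib_left exp_add)

lemma ech_int: "r \<in> \<int> \<Longrightarrow> ech r = 1"
  unfolding ech_def using exp_integer_2pi[of r] by (simp add: mult_ac)

lemma ech_shift_int: "r - s \<in> \<int> \<Longrightarrow> ech r = ech s"
  using ech_add[of s "r - s"] ech_int[of "r - s"] by simp

lemma norm_ech[simp]: "norm (ech r) = 1"
  unfolding ech_def by (simp add: mult.assoc)

lemma ech_zero[simp]: "ech 0 = 1" unfolding ech_def by simp

lemma ech_nat_mult: "ech (real n * r) = ech r ^ n"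
  unfolding ech_def by (simp add: exp_of_nat_mult[symmetric] mult_ac)

lemma ech_ne1: assumes "0 < r" "r < 1" shows "ech r \<noteq> 1"
proof
  assume "ech r = 1"
  then obtain n where n: "2 * pi * r = real_of_int (2 * n) * pi"
    unfolding ech_def exp_eq_1 by auto
  then have "r = real_of_int n" by simp
  then have "0 < n" "n < 1" using assms by simp_all
  then show False by simp
qed

lemma root_sum_zero:
  assumes "0 < d" "d < p"
  shows "(\<Sum>e<p. ech (real e * real d / real p)) = 0"
proof -
  let ?w = "ech (real d / real p)"
  have w1: "?w \<noteq> 1" using assms by (intro ech_ne1) auto
  have "(\<Sum>e<p. ech (real e * real d / real p)) = (\<Sum>e<p. ?w ^ e)"
    by (intro sum.cong refl) (simp add: ech_nat_mult[symmetric])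
  also have "\<dots> = (?w ^ p - 1) / (?w - 1)" using geometric_sum[OF w1] by simp
  also have "?w ^ p = ech (real p * (real d / real p))" by (rule ech_nat_mult[symmetric])
  also have "\<dots> = 1" using assms by (intro ech_int) simp
  finally show ?thesis by simp
qed

lemma pchi_ech: "pchi p x = ech (pfrac p x)"
  unfolding pchi_def ech_def by simp

context pp begin

lemma below_pval: "z \<in> Qp p \<Longrightarrow> \<forall>j<pval z. z j = 0"
proof -
  assume z: "z \<in> Qp p"
  show ?thesis
  proof (cases "z = pzero")
    case True then show ?thesis by (simp add: pzero_def)
  next
    case False
    then obtain j where j: "z j \<noteq> 0" "\<forall>i<j. z i = 0" using first_nonzero z by blast
    then show ?thesis using pval_eq[OF j] by simp
  qed
qed

lemma ptrunc_pm: "z \<in> Qp p \<Longrightarrow> pm p (ptrunc p z K) (pval z)"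
  using ptrunc_tr[OF below_pval] pm_tr by simp

lemma ptrunc_diff_pm:
  assumes "z \<in> Qp p" "K0 \<le> K"
  shows "pm p (ptrunc p z K - ptrunc p z K0) K0"
proof -
  obtain L where L: "\<forall>j<L. z j = 0" using Qp_low[OF assms(1)] by (elim exE)
  have L': "\<forall>j<min L K0. z j = 0" using L by simp
  have "ptrunc p z K - ptrunc p z K0 = tr p z K0 K"
    unfolding ptrunc_tr[OF L'] using tr_split[of "min L K0" K0 K z] assms(2) by simp
  then show ?thesis using pm_tr by simp
qed

lemma trunc_agree_pm:
  assumes "y \<in> Qp p" "y' \<in> Qp p" "agree M y y'"
  shows "pm p (ptrunc p y K - ptrunc p y' K) M"
proof -
  obtain L where L: "\<forall>j<L. y j = 0" "\<forall>j<L. y' j = 0" using Qp_low2[OF assms(1,2)] by metis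
  have L1: "\<forall>j<min L M. y j = 0" and L2: "\<forall>j<min L M. y' j = 0" using L by auto
  show ?thesis
  proof (cases "K \<le> M")
    case True
    have "ptrunc p y K = ptrunc p y' K" unfolding ptrunc_tr[OF L1] ptrunc_tr[OF L2] tr_def
      using assms(3) True unfolding agree_def by (intro sum.cong) auto
    then show ?thesis by simp
  next
    case False
    have e: "tr p y (min L M) M = tr p y' (min L M) M" unfolding tr_def
      using assms(3) unfolding agree_def by (intro sum.cong) auto
    have "ptrunc p y K - ptrunc p y' K = tr p y M K - tr p y' M K"
      unfolding ptrunc_tr[OF L1] ptrunc_tr[OF L2]
      using tr_split[of "min L M" M K y] tr_split[of "min L M" M K y'] False e by simp
    then show ?thesis using pm_diff[OF pm_tr pm_tr] by simp
  qed
qed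

lemma pdigit_pm_zero:
  assumes "pm p s L" "j < L"
  shows "pdigit p s j = 0"
proof -
  obtain n where n: "s = of_int n * real p powi L" using assms(1) unfolding pm_def by auto
  have "real p powi L = real p powi (L - j) * real p powi j" using Ppow_add[of "L - j" j] by simp
  also have "real p powi (L - j) = real p ^ nat (L - j)" using assms(2) by (simp add: power_int_def)
  finally have "s / real p powi j = of_int (n * int p ^ nat (L - j))" using n Ppow_nz p2 by simp
  then have "\<lfloor>s / real p powi j\<rfloor> = n * int p ^ nat (L - j)" by (metis floor_of_int)
  moreover have "int p dvd n * int p ^ nat (L - j)" using assms(2)
    by (intro dvd_mult) (simp add: dvd_power)
  ultimately show ?thesis unfolding pdigit_def by simp
qed

lemma pfrac_eq: "s - of_int \<lfloor>s\<rfloor> = s - of_int \<lfloor>s / real p powi 0\<rfloor> * real p powi 0" by simp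

lemma chi_formula0:
  assumes z: "z \<in> Qp p" and y: "y \<in> Qp p"
  defines "K0 \<equiv> max 0 (- pval z) + max 0 (- pval y)"
  shows "pchi p (pmul p z y) = ech (ptrunc p z K0 * ptrunc p y K0)"
proof -
  define s where "s = ptrunc p z K0 * ptrunc p y K0"
  define L where "L = min 0 (pval z + pval y)"
  have pms: "pm p s L" unfolding s_def L_def
    using pm_mono[OF _ pm_mult[OF ptrunc_pm[OF z] ptrunc_pm[OF y]]] by simp
  define w where "w = pmul p z y"
  have wj: "w j = pdigit p s j" if "j < 0" for j
  proof -
    have "max (j + 1) 0 = 0" using that by simp
    then show ?thesis unfolding w_def pmul_def s_def K0_def Let_def by simp
  qed
  have wL: "\<forall>j<L. w j = 0" using wj pdigit_pm_zero[OF pms] unfolding L_def by auto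
  have "pfrac p w = tr p w L 0" unfolding pfrac_def ptrunc_tr[OF wL] ..
  also have "\<dots> = (\<Sum>j\<in>{L..<0}. real (pdigit p s j) * real p powi j)"
    unfolding tr_def by (intro sum.cong) (auto simp: wj)
  also have "\<dots> = s - of_int \<lfloor>s\<rfloor>"
    using digit_exp[of L 0 s] pm_floor[OF pms] unfolding L_def by simp
  finally have "pfrac p w = s - of_int \<lfloor>s\<rfloor>" .
  then have "pchi p w = ech s" unfolding pchi_ech by (intro ech_shift_int) simp
  then show ?thesis unfolding w_def s_def .
qed

lemma chi_formula:
  assumes z: "z \<in> Qp p" and y: "y \<in> Qp p"
    and K: "max 0 (- pval z) + max 0 (- pval y) \<le> K"
  shows "pchi p (pmul p z y) = ech (ptrunc p z K * ptrunc p y K)"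
proof -
  define K0 where "K0 = max 0 (- pval z) + max 0 (- pval y)"
  have "ptrunc p z K * ptrunc p y K - ptrunc p z K0 * ptrunc p y K0 =
    ptrunc p z K * (ptrunc p y K - ptrunc p y K0) + (ptrunc p z K - ptrunc p z K0) * ptrunc p y K0"
    by (simp add: algebra_simps)
  moreover have "pm p (ptrunc p z K * (ptrunc p y K - ptrunc p y K0)) 0"
    using pm_mono[OF _ pm_mult[OF ptrunc_pm[OF z] ptrunc_diff_pm[OF y]], of 0 K0 K] K
    unfolding K0_def by simp
  moreover have "pm p ((ptrunc p z K - ptrunc p z K0) * ptrunc p y K0) 0"
    using pm_mono[OF _ pm_mult[OF ptrunc_diff_pm[OF z] ptrunc_pm[OF y]], of 0 K0 K] K
    unfolding K0_def by simp
  ultimately have "ptrunc p z K * ptrunc p y K - ptrunc p z K0 * ptrunc p y K0 \<in> \<int>"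
    using pm_int pm_add by metis
  then show ?thesis using ech_shift_int unfolding chi_formula0[OF z y] K0_def[symmetric] by metis
qed

lemma chi_agree:
  assumes z: "z \<in> Qp p" and y: "y \<in> Qp p" and y': "y' \<in> Qp p"
    and a: "agree (- pval z) y y'"
  shows "pchi p (pmul p z y) = pchi p (pmul p z y')"
proof -
  define K where "K = max 0 (- pval z) + max 0 (- pval y) + max 0 (- pval y')"
  have "pchi p (pmul p z y) = ech (ptrunc p z K * ptrunc p y K)"
    by (rule chi_formula[OF z y]) (simp add: K_def)
  moreover have "pchi p (pmul p z y') = ech (ptrunc p z K * ptrunc p y' K)"
    by (rule chi_formula[OF z y']) (simp add: K_def)
  moreover have "pm p (ptrunc p z K * (ptrunc p y K - ptrunc p y' K)) 0"
    using pm_mult[OF ptrunc_pm[OF z] trunc_agree_pm[OF y y' a]] by simp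
  then have "ptrunc p z K * ptrunc p y K - ptrunc p z K * ptrunc p y' K \<in> \<int>"
    using pm_int by (simp add: right_diff_distrib)
  ultimately show ?thesis using ech_shift_int by simp
qed

lemma upd_Qp: "y \<in> Qp p \<Longrightarrow> e < p \<Longrightarrow> y(M := e) \<in> Qp p"
proof -
  assume y: "y \<in> Qp p" and e: "e < p"
  obtain L where L: "\<forall>j<L. y j = 0" using Qp_low[OF y] by (elim exE)
  show ?thesis unfolding Qp_def using Qp_dig[OF y] e L by (auto intro!: exI[of _ "min L M"])
qed

lemma chi_digit:
  assumes z: "z \<in> Qp p" "z \<noteq> pzero" and y: "y \<in> Qp p" and e: "e < p"
  defines "M \<equiv> - pval z - 1"
  shows "pchi p (pmul p z (y(M := e))) =
     pchi p (pmul p z (y(M := 0))) * ech (real e * real (z (pval z)) / real p)"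
proof -
  define v where "v = pval z"
  have ye: "y(M := e) \<in> Qp p" and y0: "y(M := 0) \<in> Qp p" using upd_Qp y e p2 by auto
  define K where "K = max 0 (- pval z) + max 0 (- pval (y(M := e))) + max 0 (- pval (y(M := 0)))
     + max 0 (pval z + 1)"
  have c1: "pchi p (pmul p z (y(M := e))) = ech (ptrunc p z K * ptrunc p (y(M := e)) K)"
    by (rule chi_formula[OF z(1) ye]) (simp add: K_def)
  have c2: "pchi p (pmul p z (y(M := 0))) = ech (ptrunc p z K * ptrunc p (y(M := 0)) K)"
    by (rule chi_formula[OF z(1) y0]) (simp add: K_def)
  have MK: "M < K" unfolding K_def M_def by simp
  obtain L where L: "\<forall>j<L. y j = 0" using Qp_low[OF y] by (elim exE)
  define L' where "L' = min L M"
  have L1: "\<forall>j<L'. (y(M := e)) j = 0" and L2: "\<forall>j<L'. (y(M := 0)) j = 0"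
    using L unfolding L'_def by auto
  have "ptrunc p (y(M := e)) K - ptrunc p (y(M := 0)) K =
      (\<Sum>j\<in>{L'..<K}. (real ((y(M := e)) j) - real ((y(M := 0)) j)) * real p powi j)"
    unfolding ptrunc_tr[OF L1] ptrunc_tr[OF L2] tr_def by (simp add: sum_subtractf left_diff_distrib)
  also have "\<dots> = (\<Sum>j\<in>{L'..<K}. if j = M then real e * real p powi M else 0)"
    by (intro sum.cong) auto
  also have "\<dots> = real e * real p powi M" using MK unfolding L'_def by simp
  finally have d: "ptrunc p (y(M := e)) K - ptrunc p (y(M := 0)) K = real e * real p powi M" .
  have zl: "\<forall>j<v. z j = 0" using below_pval[OF z(1)] unfolding v_def .
  have vK: "v < K" unfolding K_def v_def by simp
  have "ptrunc p z K = tr p z v K" using ptrunc_tr[OF zl] .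
  also have "\<dots> = real (z v) * real p powi v + tr p z (v+1) K"
    using tr_split[of v "v+1" K z] tr_Suc[of v v z] vK by (simp add: tr_empty)
  finally have zK: "ptrunc p z K = real (z v) * real p powi v + tr p z (v+1) K" .
  have "ptrunc p z K * (real e * real p powi M) = real e * real (z v) / real p +
      real e * (tr p z (v+1) K * real p powi M)"
  proof -
    have "real p powi v * real p powi M = 1 / real p"
      unfolding M_def v_def[symmetric] using Ppow_add[of v "- v - 1"] by (simp add: power_int_minus inverse_eq_divide)
    then show ?thesis unfolding zK by (simp add: algebra_simps)
  qed
  moreover have "real e * (tr p z (v+1) K * real p powi M) \<in> \<int>"
  proof -
    have "pm p (tr p z (v+1) K * real p powi M) 0"
      using pm_mult[OF pm_tr[of z "v+1" K] pm_pow[of 1 M]] unfolding M_def v_def by simp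
    then show ?thesis using pm_int by (simp add: Ints_mult)
  qed
  ultimately have "ptrunc p z K * ptrunc p (y(M := e)) K -
      (ptrunc p z K * ptrunc p (y(M := 0)) K + real e * real (z v) / real p) \<in> \<int>"
    using d by (simp add: algebra_simps)
  then have "pchi p (pmul p z (y(M := e))) =
      ech (ptrunc p z K * ptrunc p (y(M := 0)) K + real e * real (z v) / real p)"
    unfolding c1 by (rule ech_shift_int)
  then show ?thesis unfolding c2 ech_add v_def .
qed

end


context haar begin

lemma cyl_fin[simp]: "emeasure \<mu> (cyl p c M) < \<top>" using cyl_finite by simp

lemma locconst_meas:
  fixes f :: "(int \<Rightarrow> nat) \<Rightarrow> 'b::topological_space"
  assumes "\<forall>x\<in>Qp p. \<forall>y\<in>cyl p x M. f y = f x"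
  shows "f \<in> borel_measurable \<mu>"
proof (rule borel_measurableI)
  fix S :: "'b set" assume "open S"
  have "{y \<in> Qp p. f y \<in> S} \<in> padic_borel p"
  proof (rule open_borel)
    show "\<forall>x\<in>{y \<in> Qp p. f y \<in> S}. \<exists>M. cyl p x M \<subseteq> {y \<in> Qp p. f y \<in> S}"
      using assms by (auto intro!: exI[of _ M] simp: cyl_def)
  qed auto
  moreover have "f -` S \<inter> space \<mu> = {y \<in> Qp p. f y \<in> S}" by auto
  ultimately show "f -` S \<inter> space \<mu> \<in> sets \<mu>" by simp
qed

lemma measure_cyl: "c \<in> Qp p \<Longrightarrow> measure \<mu> (cyl p c M) = real p powi (- M)"
  using cyl_meas[of c M] Ppow_pos by (simp add: measure_def less_imp_le)

lemma int_ind_const: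
  assumes "A \<in> sets \<mu>" "emeasure \<mu> A < \<infinity>"
  shows "(\<integral>y. indicator A y * (k::complex) \<partial>\<mu>) = of_real (measure \<mu> A) * k"
proof -
  have h: "has_bochner_integral \<mu> (\<lambda>x. indicat_real A x *\<^sub>R k) (measure \<mu> A *\<^sub>R k)"
    by (rule has_bochner_integral_indicator[OF assms])
  have e: "(\<lambda>x. indicat_real A x *\<^sub>R k) = (\<lambda>y. indicator A y * k)"
    by (auto simp: indicator_def fun_eq_iff)
  have "has_bochner_integral \<mu> (\<lambda>y. indicator A y * k) (of_real (measure \<mu> A) * k)"
    using h unfolding e by (simp add: scaleR_conv_of_real)
  then show ?thesis by (rule has_bochner_integral_integral_eq)
qed

lemma integrable_ind_bounded:
  assumes "A \<in> sets \<mu>" "emeasure \<mu> A < \<infinity>" "f \<in> borel_measurable \<mu>"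
    and "\<And>y. y \<in> A \<Longrightarrow> norm (f y) \<le> 1"
  shows "integrable \<mu> (\<lambda>y. indicator A y * (f y :: complex))"
proof (rule Bochner_Integration.integrable_bound[OF integrable_real_indicator[OF assms(1,2)]])
  show "(\<lambda>y. indicator A y * f y) \<in> borel_measurable \<mu>" using assms(1,3) by measurable
  show "AE x in \<mu>. norm (indicator A x * f x) \<le> norm (indicat_real A x)"
    using assms(4) by (auto simp: indicator_def norm_mult)
qed

end

locale haar_z = haar +
  fixes z :: "int \<Rightarrow> nat"
  assumes zQ: "z \<in> Qp p" and znz: "z \<noteq> pzero"
begin

abbreviation "v \<equiv> pval z"
definition F :: "(int \<Rightarrow> nat) \<Rightarrow> complex" where "F y = pchi p (pmul p z y)"
definition J :: "(int \<Rightarrow> nat) \<Rightarrow> int \<Rightarrow> complex" where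
  "J c M = (\<integral>y. indicator (cyl p c M) y * F y \<partial>\<mu>)"

lemma F_const: "x \<in> Qp p \<Longrightarrow> y \<in> cyl p x M \<Longrightarrow> - v \<le> M \<Longrightarrow> F y = F x"
  unfolding F_def cyl_def by (intro chi_agree zQ) (auto intro: agree_mono)

lemma F_meas[measurable]: "F \<in> borel_measurable \<mu>"
  by (rule locconst_meas[of "- v"]) (auto intro: F_const)

lemma norm_F[simp]: "norm (F y) = 1"
  unfolding F_def pchi_ech by simp

lemma F_int: "integrable \<mu> (\<lambda>y. indicator (cyl p c M) y * F y)"
  by (rule integrable_ind_bounded) auto

lemma J_const:
  assumes "c \<in> Qp p" "- v \<le> M"
  shows "J c M = F c * of_real (real p powi (- M))"
proof -
  have "J c M = (\<integral>y. indicator (cyl p c M) y * F c \<partial>\<mu>)"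
    unfolding J_def
    by (intro Bochner_Integration.integral_cong refl) (auto simp: indicator_def F_const[OF assms(1) _ assms(2)])
  also have "\<dots> = of_real (measure \<mu> (cyl p c M)) * F c"
    by (rule int_ind_const) auto
  finally show ?thesis using measure_cyl[OF assms(1)] by simp
qed

lemma J_split: "J c M = (\<Sum>e<p. J (c(M := e)) (M+1))"
proof -
  have "indicator (cyl p c M) y = (\<Sum>e<p. indicator (cyl p (c(M := e)) (M+1)) y :: complex)" for y
    unfolding cyl_split[of c M] by (rule indicator_UN_disjoint) (auto intro: cyl_split_disj)
  then have "J c M = (\<integral>y. (\<Sum>e<p. indicator (cyl p (c(M := e)) (M+1)) y * F y) \<partial>\<mu>)"
    unfolding J_def by (simp add: sum_distrib_right)
  also have "\<dots> = (\<Sum>e<p. J (c(M := e)) (M+1))"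
    unfolding J_def by (rule Bochner_Integration.integral_sum) (rule F_int)
  finally show ?thesis .
qed

lemma zv: "0 < z v" "z v < p"
proof -
  obtain j where j: "z j \<noteq> 0" "\<forall>i<j. z i = 0" using first_nonzero[OF zQ znz] by blast
  have "v = j" using pval_eq(2)[OF j] .
  then show "0 < z v" using j by simp
  show "z v < p" using Qp_dig[OF zQ] .
qed

lemma J_zero: "c \<in> Qp p \<Longrightarrow> J c (- v - 1 - int n) = 0"
proof (induction n arbitrary: c)
  case 0
  define M where "M = - v - 1"
  have "J c M = (\<Sum>e<p. J (c(M := e)) (M+1))" by (rule J_split)
  also have "\<dots> = (\<Sum>e<p. F (c(M := 0)) * ech (real e * real (z v) / real p) * of_real (real p powi (- (M+1))))"
  proof (rule sum.cong[OF refl])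
    fix e assume "e \<in> {..<p}"
    then have e: "e < p" by simp
    have "J (c(M := e)) (M+1) = F (c(M := e)) * of_real (real p powi (- (M+1)))"
      by (rule J_const) (auto simp: M_def upd_Qp[OF "0.prems" e])
    also have "F (c(M := e)) = F (c(M := 0)) * ech (real e * real (z v) / real p)"
      unfolding F_def M_def by (rule chi_digit[OF zQ znz "0.prems" e])
    finally show "J (c(M := e)) (M+1) = F (c(M := 0)) * ech (real e * real (z v) / real p) *
        of_real (real p powi (- (M+1)))" .
  qed
  also have "\<dots> = F (c(M := 0)) * of_real (real p powi (- (M+1))) * (\<Sum>e<p. ech (real e * real (z v) / real p))"
    by (simp add: sum_distrib_left mult_ac)
  also have "\<dots> = 0" using root_sum_zero[OF zv] by simp
  finally show ?case unfolding M_def by simp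
next
  case (Suc n)
  define M where "M = - v - 1 - int (Suc n)"
  have "J c M = (\<Sum>e<p. J (c(M := e)) (M+1))" by (rule J_split)
  also have "\<dots> = 0"
  proof (rule sum.neutral, intro ballI)
    fix e assume "e \<in> {..<p}"
    then have cq: "c(M := e) \<in> Qp p" using upd_Qp Suc.prems by simp
    have eq: "M + 1 = - v - 1 - int n" unfolding M_def by simp
    show "J (c(M := e)) (M+1) = 0" unfolding eq by (rule Suc.IH[OF cq])
  qed
  finally show ?case unfolding M_def .
qed

lemma F_pzero: "F pzero = 1"
proof -
  have "ptrunc p pzero K = 0" for K unfolding ptrunc_def pzero_def by simp
  then show ?thesis unfolding F_def using chi_formula0[OF zQ pzero_Qp] by simp
qed

lemma J_ball: "J pzero M = (if - v \<le> M then of_real (real p powi (- M)) else 0)"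
proof (cases "- v \<le> M")
  case True
  then show ?thesis using J_const[OF pzero_Qp True] F_pzero by simp
next
  case False
  define n where "n = nat (- v - 1 - M)"
  have "M = - v - 1 - int n" using False unfolding n_def by simp
  then show ?thesis using J_zero[OF pzero_Qp] False by simp
qed

end


locale gfun = pp +
  fixes s b :: real
  assumes s_pos: "0 < s" and b_pos: "0 < b"
begin

definition u :: "int \<Rightarrow> real" where "u m = real p powr (real_of_int m * b)"
definition g :: "int \<Rightarrow> real" where "g m = exp (- s * u m)"
definition cc :: "int \<Rightarrow> real" where "cc m = g m - g (m + 1)"
definition Q :: real where "Q = real p powr b"

lemma Q_gt1: "1 < Q" unfolding Q_def using P_gt1 b_pos by simp

lemma u_pos: "0 < u m" unfolding u_def using P_pos by simp

lemma u_mono: "m \<le> m' \<Longrightarrow> u m \<le> u m'"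
  unfolding u_def using P_gt1 b_pos by (intro powr_mono) (auto intro: mult_right_mono)

lemma u_add: "u (m + int n) = u m * Q ^ n"
proof -
  have "u (m + int n) = real p powr (real_of_int m * b + real n * b)"
    unfolding u_def by (simp add: algebra_simps)
  also have "\<dots> = u m * (real p powr b) powr real n"
    unfolding u_def powr_add powr_powr by (simp add: mult.commute)
  also have "(real p powr b) powr real n = Q ^ n" unfolding Q_def
    by (rule powr_realpow) (use P_pos in simp)
  finally show ?thesis .
qed

lemma u_sub: "u (m - int n) = u m * (1 / Q) ^ n"
proof -
  have "u m = u ((m - int n) + int n)" by simp
  also have "\<dots> = u (m - int n) * Q ^ n" by (rule u_add)
  finally show ?thesis using Q_gt1 by (simp add: field_simps power_one_over)
qed

lemma pabs_powr: "(real p powi k) powr b = u k"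
proof -
  have "real p powi k = real p powr real_of_int k"
    by (rule powr_real_of_int'[symmetric]) (use P_pos in auto)
  then show ?thesis unfolding u_def by (simp add: powr_powr)
qed

lemma g_pos: "0 < g m" unfolding g_def by simp
lemma g_le1: "g m \<le> 1" unfolding g_def using s_pos u_pos[of m] by simp
lemma g_mono: "m \<le> m' \<Longrightarrow> g m' \<le> g m"
  unfolding g_def using s_pos u_mono by (simp add: mult_left_mono)
lemma cc_nonneg: "0 \<le> cc m" unfolding cc_def using g_mono[of m "m+1"] by simp
lemma cc_le1: "cc m \<le> 1" unfolding cc_def using g_pos[of "m+1"] g_le1[of m] by simp

lemma tele_up: "(\<Sum>k<n. cc (a + int k)) = g a - g (a + int n)"
  by (induction n) (auto simp: cc_def algebra_simps)

lemma tele_down: "(\<Sum>k<n. cc (a - int k)) = g (a - int n + 1) - g (a + 1)"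
  by (induction n) (auto simp: cc_def algebra_simps)

lemma g_up_lim: "(\<lambda>n. g (a + int n)) \<longlonglongrightarrow> 0"
proof -
  have "filterlim (\<lambda>n. Q ^ n) at_top sequentially"
    using Q_gt1 by (intro filterlim_realpow_sequentially_gt1 [THEN filterlim_at_infinity_imp_filterlim_at_top]) auto
  then have "filterlim (\<lambda>n. s * u a * Q ^ n) at_top sequentially"
    using s_pos u_pos[of a] by (intro filterlim_tendsto_pos_mult_at_top[OF tendsto_const]) auto
  then have "((\<lambda>n. exp (- (s * u a * Q ^ n))) \<longlongrightarrow> 0) sequentially"
    by (intro filterlim_compose[OF exp_at_bot]) (simp add: filterlim_uminus_at_bot)
  then show ?thesis unfolding g_def u_add by (simp add: mult_ac)
qed

lemma g_down_lim: "(\<lambda>n. g (a - int n)) \<longlonglongrightarrow> 1"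
proof -
  have Q0: "0 < Q" using Q_gt1 by simp
  have nQ: "norm (1 / Q) < 1" using Q_gt1 Q0 by (simp add: abs_of_pos)
  have "(\<lambda>n. exp (- s * (u a * (1 / Q) ^ n))) \<longlonglongrightarrow> exp (- s * (u a * 0))"
    by (intro tendsto_intros nQ)
  then show ?thesis unfolding g_def u_sub by simp
qed

lemma sums_up: "(\<lambda>k. cc (a + int k)) sums g a"
proof -
  have "(\<lambda>n. g a - g (a + int n)) \<longlonglongrightarrow> g a - 0" by (intro tendsto_intros g_up_lim)
  then show ?thesis unfolding sums_def tele_up by simp
qed

lemma sums_down: "(\<lambda>k. cc (a - int k)) sums (1 - g (a + 1))"
proof -
  have "(\<lambda>n. g ((a + 1) - int n) - g (a + 1)) \<longlonglongrightarrow> 1 - g (a + 1)"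
    by (intro tendsto_intros g_down_lim)
  then show ?thesis unfolding sums_def tele_down by (simp add: algebra_simps)
qed

lemma decay: "summable (\<lambda>n. g (a + int n) * real p powi (a + int n))"
proof -
  define X where "X = ln (2 * real p) / (s * (Q - 1))"
  obtain N where N: "X / u a < Q ^ N"
    using real_arch_pow[OF Q_gt1] by blast
  show ?thesis
  proof (rule summable_ratio_test[of "1/2" N])
    fix n assume n: "N \<le> n"
    have "Q ^ N \<le> Q ^ n" using n Q_gt1 by (intro power_increasing) auto
    moreover have "X < u a * Q ^ N" using N u_pos[of a] by (simp add: field_simps)
    ultimately have "X < u a * Q ^ n" using u_pos[of a]
      by (meson less_le_trans mult_left_mono less_imp_le)
    then have Xu: "X < u (a + int n)" using u_add by simp
    have "ln (2 * real p) \<le> s * (Q - 1) * u (a + int n)"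
      using Xu s_pos Q_gt1 unfolding X_def by (simp add: field_simps)
    then have "exp (ln (2 * real p)) \<le> exp (s * (Q - 1) * u (a + int n))" by simp
    then have e: "2 * real p \<le> exp (s * (Q - 1) * u (a + int n))" using P_pos by simp
    have uS: "u (a + int (Suc n)) = u (a + int n) * Q" using u_add[of a "Suc n"] u_add[of a n] by simp
    have "g (a + int (Suc n)) * real p powi (a + int (Suc n)) =
        (g (a + int n) * real p powi (a + int n)) * (real p / exp (s * (Q - 1) * u (a + int n)))"
      unfolding g_def uS using Ppow_Suc[of "a + int n"]
      by (simp add: exp_diff[symmetric] exp_minus field_simps exp_add[symmetric])
    also have "\<dots> \<le> (g (a + int n) * real p powi (a + int n)) * (1/2)"
    proof (rule mult_left_mono)
      show "real p / exp (s * (Q - 1) * u (a + int n)) \<le> 1 / 2" using e P_pos by (simp add: field_simps)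
      show "0 \<le> g (a + int n) * real p powi (a + int n)" using g_pos Ppow_pos by (simp add: less_imp_le)
    qed
    finally show "norm (g (a + int (Suc n)) * real p powi (a + int (Suc n))) \<le>
        1 / 2 * norm (g (a + int n) * real p powi (a + int n))"
      using g_pos Ppow_pos by (simp add: abs_of_pos mult_ac)
  qed simp
qed

end


context haar begin

lemma exists_small: "0 < a \<Longrightarrow> \<exists>M. real p powi (- M) < a"
proof -
  assume a: "0 < a"
  obtain n where n: "(1 / real p) ^ n < a" using real_arch_pow_inv[OF a, of "1 / real p"] P_gt1 by auto
  have "real p powi (- int n) = (1 / real p) ^ n" by (simp add: power_int_minus power_one_over inverse_eq_divide)
  then show ?thesis using n by (intro exI[of _ "int n"]) simp
qed

lemma pabs_meas[measurable]: "pabs p \<in> borel_measurable \<mu>"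
proof (rule borel_measurableI_less)
  fix a :: real
  show "{w \<in> space \<mu>. pabs p w < a} \<in> sets \<mu>"
  proof (cases "0 < a")
    case False
    then have e: "{w \<in> space \<mu>. pabs p w < a} = {}" using pabs_nonneg by (auto simp: not_less intro: order_trans)
    show ?thesis unfolding e by (rule sets.empty_sets)
  next
    case True
    obtain M where M: "real p powi (- M) < a" using exists_small[OF True] by blast
    have "{w \<in> Qp p. pabs p w < a} \<in> padic_borel p"
    proof (rule open_borel)
      show "\<forall>x\<in>{w \<in> Qp p. pabs p w < a}. \<exists>M. cyl p x M \<subseteq> {w \<in> Qp p. pabs p w < a}"
      proof (intro ballI exI[of _ M] subsetI)
        fix x y assume x: "x \<in> {w \<in> Qp p. pabs p w < a}" and y: "y \<in> cyl p x M"
        have "pabs p y \<le> max (pabs p x) (real p powi (- M))"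
          using y x by (intro agree_pabs) (auto simp: cyl_def)
        then show "y \<in> {w \<in> Qp p. pabs p w < a}" using x y M by (auto simp: cyl_def)
      qed
    qed auto
    then show ?thesis by simp
  qed
qed

end

locale rho_loc = haar_z + gfun
begin

definition gy :: "(int \<Rightarrow> nat) \<Rightarrow> real" where "gy y = exp (- s * pabs p y powr b)"
definition Phi :: "(int \<Rightarrow> nat) \<Rightarrow> complex" where "Phi y = F y * complex_of_real (gy y)"
abbreviation "Bv \<equiv> cyl p pzero (- v)"
definition Sh :: "int \<Rightarrow> (int \<Rightarrow> nat) set" where "Sh m = cyl p pzero (- m) - cyl p pzero (- m + 1)"
definition ff :: "nat \<Rightarrow> (int \<Rightarrow> nat) \<Rightarrow> complex" where
  "ff n y = (case n of 0 \<Rightarrow> indicator Bv y * Phi y | Suc k \<Rightarrow> indicator (Sh (v + 1 + int k)) y * Phi y)"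

lemma gy_meas[measurable]: "gy \<in> borel_measurable \<mu>" unfolding gy_def by measurable
lemma Phi_meas[measurable]: "Phi \<in> borel_measurable \<mu>" unfolding Phi_def by measurable
lemma Sh_sets[measurable]: "Sh m \<in> sets \<mu>" unfolding Sh_def by (intro sets.Diff cyl_sets)
lemma Sh_borel[simp]: "Sh m \<in> padic_borel p" using Sh_sets by simp

lemma pabs_val: assumes "y \<in> Qp p" "y \<noteq> pzero" shows "pabs p y = real p powi (- pval y)"
proof -
  obtain j where j: "y j \<noteq> 0" "\<forall>i<j. y i = 0" using first_nonzero assms by blast
  show ?thesis using pabs_eq[OF j] pval_eq[OF j] by simp
qed

lemma gy_val: "y \<in> Qp p \<Longrightarrow> y \<noteq> pzero \<Longrightarrow> gy y = g (- pval y)"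
  unfolding gy_def g_def using pabs_val pabs_powr by simp

lemma gy_zero: "gy pzero = 1" unfolding gy_def by simp

lemma gy_nonneg: "0 \<le> gy y" unfolding gy_def by simp
lemma gy_le1: "gy y \<le> 1" unfolding gy_def using s_pos
  by (simp add: mult_nonneg_nonneg)

lemma norm_Phi: "norm (Phi y) = gy y"
  unfolding Phi_def using gy_nonneg by (simp add: norm_mult)

lemma cyl0_iff: "y \<in> Qp p \<Longrightarrow> y \<in> cyl p pzero M \<longleftrightarrow> (y = pzero \<or> M \<le> pval y)"
proof -
  assume y: "y \<in> Qp p"
  show ?thesis
  proof (cases "y = pzero")
    case True then show ?thesis using y by (simp add: cyl_def agree_def)
  next
    case False
    obtain j where j: "y j \<noteq> 0" "\<forall>i<j. y i = 0" using first_nonzero y False by blast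
    have "(\<forall>i<M. y i = 0) \<longleftrightarrow> M \<le> j"
    proof
      assume "\<forall>i<M. y i = 0" then show "M \<le> j" using j(1) by (meson not_le)
    next
      assume "M \<le> j" then show "\<forall>i<M. y i = 0" using j by simp
    qed
    then show ?thesis using y False pval_eq[OF j] by (simp add: cyl_def agree_def pzero_def)
  qed
qed

lemma Sh_iff: "y \<in> Qp p \<Longrightarrow> y \<in> Sh m \<longleftrightarrow> (y \<noteq> pzero \<and> pval y = - m)"
  unfolding Sh_def using cyl0_iff by (auto simp: cyl_def)

lemma Sh_sub: "Sh m \<subseteq> Qp p" unfolding Sh_def cyl_def by auto

lemma ff_sum: assumes y: "y \<in> Qp p" shows "(\<lambda>n. ff n y) sums Phi y"
proof (cases "y \<in> Bv")
  case True
  have "ff (Suc k) y = 0" for k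
  proof -
    have "y \<notin> Sh (v + 1 + int k)" using True y unfolding Sh_iff[OF y] cyl0_iff[OF y] by auto
    then show ?thesis unfolding ff_def by simp
  qed
  then have "(\<lambda>n. ff n y) sums (\<Sum>n\<in>{0}. ff n y)"
    by (intro sums_finite) (auto simp: not0_implies_Suc gr0_conv_Suc)
  then show ?thesis using True unfolding ff_def by simp
next
  case False
  then have ynz: "y \<noteq> pzero" and w: "pval y < - v" using cyl0_iff[OF y] by auto
  define k where "k = nat (- pval y - v - 1)"
  have ysh: "y \<in> Sh (v + 1 + int k)" unfolding Sh_iff[OF y] k_def using ynz w by simp
  have "ff n y = 0" if "n \<noteq> Suc k" for n
  proof (cases n)
    case 0 then show ?thesis using False unfolding ff_def by simp
  next
    case (Suc k')
    then have "k' \<noteq> k" using that by simp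
    then have "y \<notin> Sh (v + 1 + int k')" unfolding Sh_iff[OF y] k_def using w by auto
    then show ?thesis unfolding ff_def Suc by simp
  qed
  then have "(\<lambda>n. ff n y) sums (\<Sum>n\<in>{Suc k}. ff n y)" by (intro sums_finite) auto
  then show ?thesis using ysh unfolding ff_def by simp
qed

lemma ff_fin_supp: assumes xq: "x \<in> Qp p" shows "\<exists>N. finite N \<and> (\<forall>n. n \<notin> N \<longrightarrow> ff n x = 0)"
proof (cases "x \<in> Bv")
  case True
  have "ff (Suc k) x = 0" for k
  proof -
    have "x \<notin> Sh (v + 1 + int k)" using True xq unfolding Sh_iff[OF xq] cyl0_iff[OF xq] by auto
    then show ?thesis unfolding ff_def by simp
  qed
  then show ?thesis by (intro exI[of _ "{0}"]) (auto simp: not0_implies_Suc gr0_conv_Suc)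
next
  case False
  define k where "k = nat (- pval x - v - 1)"
  have w: "pval x < - v" using False cyl0_iff[OF xq] by auto
  have "ff n x = 0" if "n \<noteq> Suc k" for n
  proof (cases n)
    case 0 then show ?thesis using False unfolding ff_def by simp
  next
    case (Suc k')
    then have "k' \<noteq> k" using that by simp
    then have "x \<notin> Sh (v + 1 + int k')" unfolding Sh_iff[OF xq] k_def using w by auto
    then show ?thesis unfolding ff_def Suc by simp
  qed
  then show ?thesis by (intro exI[of _ "{Suc k}"]) auto
qed

lemma ff_meas[measurable]: "ff n \<in> borel_measurable \<mu>"
  unfolding ff_def by (cases n) simp_all

lemma ff_int: "integrable \<mu> (ff n)"
proof -
  have "integrable \<mu> (\<lambda>y. indicator A y * Phi y)" if A: "A \<in> sets \<mu>" "emeasure \<mu> A < \<top>" for A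
    by (rule integrable_ind_bounded) (use A norm_Phi gy_le1 in auto)
  moreover have "emeasure \<mu> (Sh m) < \<top>" for m
    using emeasure_mono[of "Sh m" "cyl p pzero (- m)" \<mu>] cyl_fin[of pzero "-m"]
    unfolding Sh_def by (simp add: le_less_trans)
  ultimately show ?thesis unfolding ff_def by (cases n) auto
qed

definition BB :: "nat \<Rightarrow> real" where
  "BB n = g (v + int n) * real p powi (v + int n) + (if n = 0 then real p powi v else 0)"

lemma BB_summable: "summable BB"
proof -
  have "summable (\<lambda>n. if n = 0 then real p powi v else (0::real))"
    by (rule summable_finite[of "{0}"]) auto
  then show ?thesis unfolding BB_def by (intro summable_add decay)
qed

lemma ff_norm_int: "(\<integral>y. norm (ff n y) \<partial>\<mu>) \<le> BB n"
proof (cases n)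
  case 0
  have "(\<integral>y. norm (ff n y) \<partial>\<mu>) \<le> (\<integral>y. indicator Bv y \<partial>\<mu>)"
  proof (rule integral_mono)
    show "integrable \<mu> (\<lambda>y. norm (ff n y))" using ff_int by simp
    show "integrable \<mu> (indicat_real Bv)" by (rule integrable_real_indicator) auto
    fix y show "norm (ff n y) \<le> indicator Bv y" unfolding ff_def 0 using gy_le1
      by (auto simp: indicator_def norm_mult norm_Phi)
  qed
  also have "\<dots> = real p powi v" using measure_cyl[OF pzero_Qp, of "- v"] by (simp add: Int_absorb2 cyl_def)
  also have "\<dots> \<le> BB n" unfolding BB_def 0 using g_pos Ppow_pos by (simp add: less_imp_le)
  finally show ?thesis .
next
  case (Suc k)
  define m where "m = v + int n"
  have mm: "v + 1 + int k = m" unfolding m_def Suc by simp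
  have ffn: "ff n y = indicator (Sh m) y * Phi y" for y by (simp only: ff_def Suc nat.case mm)
  have "(\<integral>y. norm (ff n y) \<partial>\<mu>) \<le> (\<integral>y. g m * indicator (cyl p pzero (- m)) y \<partial>\<mu>)"
  proof (rule integral_mono)
    show "integrable \<mu> (\<lambda>y. norm (ff n y))" using ff_int by simp
    show "integrable \<mu> (\<lambda>y. g m * indicat_real (cyl p pzero (- m)) y)"
      by (intro integrable_mult_right integrable_real_indicator) auto
    fix y show "norm (ff n y) \<le> g m * indicator (cyl p pzero (- m)) y"
    proof (cases "y \<in> Sh m")
      case True
      then have "y \<in> Qp p" using Sh_sub by auto
      then have "gy y = g m" using True Sh_iff gy_val by force
      moreover have "y \<in> cyl p pzero (- m)" using True unfolding Sh_def by auto
      ultimately show ?thesis unfolding ffn using True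
        by (simp add: norm_mult norm_Phi)
    next
      case False
      then show ?thesis unfolding ffn using g_pos
        by (simp add: less_imp_le)
    qed
  qed
  also have "\<dots> = g m * real p powi m" using measure_cyl[OF pzero_Qp, of "- m"] by (simp add: Int_absorb2 cyl_def)
  also have "\<dots> \<le> BB n" unfolding BB_def m_def Suc by simp
  finally show ?thesis .
qed

lemma int_ff_summable: "summable (\<lambda>n. \<integral>y. norm (ff n y) \<partial>\<mu>)"
  by (rule summable_comparison_test'[OF BB_summable, of 0]) (use ff_norm_int in auto)

lemma int_Phi: "(\<integral>y. Phi y \<partial>\<mu>) = (\<Sum>n. \<integral>y. ff n y \<partial>\<mu>)"
proof -
  have "(\<integral>y. Phi y \<partial>\<mu>) = (\<integral>y. (\<Sum>n. ff n y) \<partial>\<mu>)"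
    by (intro Bochner_Integration.integral_cong refl) (use ff_sum sums_unique in auto)
  also have "\<dots> = (\<Sum>n. \<integral>y. ff n y \<partial>\<mu>)"
  proof (rule integral_suminf)
    show "integrable \<mu> (ff i)" for i by (rule ff_int)
    show "AE x in \<mu>. summable (\<lambda>i. norm (ff i x))"
    proof (rule AE_I2)
      fix x assume "x \<in> space \<mu>"
      then obtain N where "finite N" "\<forall>n. n \<notin> N \<longrightarrow> ff n x = 0" using ff_fin_supp by force
      then show "summable (\<lambda>i. norm (ff i x))" by (intro summable_finite[of N]) auto
    qed
    show "summable (\<lambda>i. \<integral>x. norm (ff i x) \<partial>\<mu>)" by (rule int_ff_summable)
  qed
  finally show ?thesis .
qed

end


context rho_loc begin

lemma J_ball_neg: "J pzero (- (v + 1 + int k)) = 0"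
  using J_ball by simp

lemma J_ball2: "J pzero (- (v + 1 + int k) + 1) = (if k = 0 then of_real (real p powi v) else 0)"
  using J_ball[of "- (v + 1 + int k) + 1"] by auto

lemma int_ff_Suc: "(\<integral>y. ff (Suc k) y \<partial>\<mu>) =
    of_real (g (v + 1 + int k)) * (J pzero (- (v + 1 + int k)) - J pzero (- (v + 1 + int k) + 1))"
proof -
  define m where "m = v + 1 + int k"
  have sub: "cyl p pzero (- m + 1) \<subseteq> cyl p pzero (- m)" by (rule cyl_mono) simp
  have ffk: "ff (Suc k) y = indicator (Sh m) y * Phi y" for y by (simp only: ff_def nat.case m_def)
  have eq: "ff (Suc k) y = of_real (g m) *
      (indicator (cyl p pzero (- m)) y * F y - indicator (cyl p pzero (- m + 1)) y * F y)" for y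
  proof (cases "y \<in> Sh m")
    case True
    then have yq: "y \<in> Qp p" using Sh_sub by auto
    then have "gy y = g m" using True Sh_iff gy_val by force
    then show ?thesis using True unfolding ffk Phi_def using True unfolding Sh_def
      by (simp add: mult_ac)
  next
    case False
    then have "indicator (cyl p pzero (- m)) y = (indicator (cyl p pzero (- m + 1)) y :: complex)"
      using sub unfolding Sh_def by (auto simp: indicator_def)
    then show ?thesis using False unfolding ffk by simp
  qed
  have "(\<integral>y. ff (Suc k) y \<partial>\<mu>) = of_real (g m) * (\<integral>y.
      (indicator (cyl p pzero (- m)) y * F y - indicator (cyl p pzero (- m + 1)) y * F y) \<partial>\<mu>)"
    unfolding eq by (rule integral_mult_right_zero)
  also have "(\<integral>y. (indicator (cyl p pzero (- m)) y * F y - indicator (cyl p pzero (- m + 1)) y * F y) \<partial>\<mu>)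
      = J pzero (- m) - J pzero (- m + 1)"
    unfolding J_def by (rule Bochner_Integration.integral_diff) (rule F_int)+
  finally show ?thesis unfolding m_def .
qed

lemma int_ff_1: "(\<integral>y. ff (Suc 0) y \<partial>\<mu>) = - of_real (g (v + 1) * real p powi v)"
  using int_ff_Suc[of 0] J_ball_neg[of 0] J_ball2[of 0] by simp

lemma int_ff_ge2: "(\<integral>y. ff (Suc (Suc k)) y \<partial>\<mu>) = 0"
  using int_ff_Suc[of "Suc k"] J_ball_neg[of "Suc k"] J_ball2[of "Suc k"] by simp

definition Sdown :: real where "Sdown = (\<Sum>k. cc (v - int k) * real p powi (v - int k))"

lemma Sdown_summable: "summable (\<lambda>k. cc (v - int k) * real p powi (v - int k))"
proof (rule summable_comparison_test'[of "\<lambda>k. real p powi v * (1 / real p) ^ k" 0])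
  show "summable (\<lambda>k. real p powi v * (1 / real p) ^ k)"
    using P_gt1 by (intro summable_mult summable_geometric) simp
  fix k :: nat
  have "real p powi (v - int k) = real p powi v * (1 / real p) ^ k"
    using Ppow_add[of v "- int k"] by (simp add: power_int_minus power_one_over inverse_eq_divide)
  then show "norm (cc (v - int k) * real p powi (v - int k)) \<le> real p powi v * (1 / real p) ^ k"
    using cc_nonneg[of "v - int k"] cc_le1[of "v - int k"] Ppow_pos[of "v - int k"]
    by (simp add: abs_mult mult_left_le_one_le)
qed

lemma pointwise0:
  assumes y: "y \<in> Qp p"
  shows "ennreal (indicator Bv y * gy y) = ennreal (g (v + 1)) * indicator Bv y +
     (\<Sum>k. ennreal (cc (v - int k)) * indicator (cyl p pzero (int k - v)) y)"
proof (cases "y \<in> Bv")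
  case False
  have "y \<notin> cyl p pzero (int k - v)" for k using False cyl_mono[of "- v" "int k - v" pzero] by auto
  then show ?thesis using False by simp
next
  case True
  show ?thesis
  proof (cases "y = pzero")
    case yz: True
    have "(\<Sum>k. ennreal (cc (v - int k)) * indicator (cyl p pzero (int k - v)) y) =
        (\<Sum>k. ennreal (cc (v - int k)))" using y yz by (simp add: cyl0_iff)
    also have "\<dots> = ennreal (\<Sum>k. cc (v - int k))"
      using sums_down[of v] cc_nonneg by (intro suminf_ennreal2) (auto simp: sums_iff)
    also have "(\<Sum>k. cc (v - int k)) = 1 - g (v + 1)" using sums_down[of v] by (simp add: sums_iff)
    finally show ?thesis using yz True gy_zero g_le1[of "v+1"] g_pos[of "v+1"]
      by (simp add: ennreal_plus[symmetric] less_imp_le)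
  next
    case ynz: False
    define w where "w = pval y"
    have wv: "- v \<le> w" using True ynz cyl0_iff[OF y] unfolding w_def by auto
    define n where "n = nat (v + w + 1)"
    have ind: "indicator (cyl p pzero (int k - v)) y = (if k < n then 1 else (0::ennreal))" for k
      using cyl0_iff[OF y] ynz wv unfolding n_def w_def by auto
    have "(\<Sum>k. ennreal (cc (v - int k)) * indicator (cyl p pzero (int k - v)) y) =
        (\<Sum>k<n. ennreal (cc (v - int k)))"
      unfolding ind by (subst suminf_finite[of "{..<n}"]) auto
    also have "\<dots> = ennreal (\<Sum>k<n. cc (v - int k))" using cc_nonneg by (intro sum_ennreal) auto
    also have "(\<Sum>k<n. cc (v - int k)) = g (- w) - g (v + 1)"
      unfolding tele_down n_def using wv by simp
    finally have "(\<Sum>k. ennreal (cc (v - int k)) * indicator (cyl p pzero (int k - v)) y) =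
        ennreal (g (- w) - g (v + 1))" .
    moreover have "gy y = g (- w)" using gy_val[OF y ynz] unfolding w_def .
    moreover have "g (v + 1) \<le> g (- w)" using wv by (intro g_mono) simp
    ultimately show ?thesis using True g_pos[of "v+1"]
      by (simp add: ennreal_plus[symmetric] less_imp_le)
  qed
qed

lemma int_ff_0: "(\<integral>y. ff 0 y \<partial>\<mu>) = of_real (g (v + 1) * real p powi v + Sdown)"
proof -
  have eq: "ff 0 y = of_real (indicator Bv y * gy y)" for y
  proof (cases "y \<in> Bv")
    case True
    then have "F y = 1" using F_const[OF pzero_Qp True] F_pzero by simp
    then show ?thesis using True unfolding ff_def Phi_def by simp
  qed (simp add: ff_def)
  have "(\<integral>y. indicator Bv y * gy y \<partial>\<mu>) = enn2real (\<integral>\<^sup>+ y. ennreal (indicator Bv y * gy y) \<partial>\<mu>)"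
    by (rule integral_eq_nn_integral) (auto simp: gy_nonneg)
  also have "(\<integral>\<^sup>+ y. ennreal (indicator Bv y * gy y) \<partial>\<mu>) =
      (\<integral>\<^sup>+ y. ennreal (g (v + 1)) * indicator Bv y +
         (\<Sum>k. ennreal (cc (v - int k)) * indicator (cyl p pzero (int k - v)) y) \<partial>\<mu>)"
    by (intro nn_integral_cong) (simp add: pointwise0)
  also have "\<dots> = ennreal (g (v + 1)) * emeasure \<mu> Bv +
      (\<Sum>k. ennreal (cc (v - int k)) * emeasure \<mu> (cyl p pzero (int k - v)))"
    by (subst nn_integral_add) (auto simp: nn_integral_suminf nn_integral_cmult)
  also have "\<dots> = ennreal (g (v + 1) * real p powi v) +
      (\<Sum>k. ennreal (cc (v - int k) * real p powi (v - int k)))"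
    using g_pos cc_nonneg Ppow_pos by (simp add: cyl0_meas ennreal_mult less_imp_le)
  also have "(\<Sum>k. ennreal (cc (v - int k) * real p powi (v - int k))) = ennreal Sdown"
    unfolding Sdown_def using cc_nonneg Ppow_pos
    by (intro suminf_ennreal2 Sdown_summable) (simp add: less_imp_le)
  also have "ennreal (g (v + 1) * real p powi v) + ennreal Sdown = ennreal (g (v + 1) * real p powi v + Sdown)"
    using g_pos Ppow_pos Sdown_summable cc_nonneg
    by (intro ennreal_plus[symmetric]) (auto simp: Sdown_def less_imp_le intro!: suminf_nonneg)
  also have "enn2real (ennreal (g (v + 1) * real p powi v + Sdown)) = g (v + 1) * real p powi v + Sdown"
  proof (rule enn2real_ennreal)
    have "0 \<le> Sdown" unfolding Sdown_def using cc_nonneg Ppow_pos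
      by (intro suminf_nonneg Sdown_summable) (simp add: less_imp_le)
    then show "0 \<le> g (v + 1) * real p powi v + Sdown" using g_pos[of "v+1"] Ppow_pos[of v] by simp
  qed
  finally have "(\<integral>y. indicator Bv y * gy y \<partial>\<mu>) = g (v + 1) * real p powi v + Sdown" .
  then show ?thesis unfolding eq integral_complex_of_real by simp
qed

lemma Phi_integral: "(\<integral>y. Phi y \<partial>\<mu>) = of_real Sdown"
proof -
  have "(\<Sum>n. \<integral>y. ff n y \<partial>\<mu>) = (\<Sum>n\<in>{0, Suc 0}. \<integral>y. ff n y \<partial>\<mu>)"
  proof (rule suminf_finite)
    fix n :: nat assume "n \<notin> {0, Suc 0}"
    then obtain k where "n = Suc (Suc k)" by (metis insertCI not0_implies_Suc)
    then show "(\<integral>y. ff n y \<partial>\<mu>) = 0" using int_ff_ge2 by simp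
  qed simp
  then show ?thesis unfolding int_Phi using int_ff_0 int_ff_1 by simp
qed

end


context pp begin

lemma padd_Qp:
  assumes "x \<in> Qp p" "y \<in> Qp p"
  shows "padd p x y \<in> Qp p"
proof -
  obtain L where L: "\<forall>j<L. x j = 0" "\<forall>j<L. y j = 0" using Qp_low2[OF assms] by metis
  have "\<forall>k<L. padd p x y k = 0"
  proof (intro allI impI)
    fix k assume k: "k < L"
    have "ptrunc p x (k+1) = 0" "ptrunc p y (k+1) = 0"
      using ptrunc_tr[OF L(1)] ptrunc_tr[OF L(2)] tr_zero_below[OF L(1)] tr_zero_below[OF L(2)] k by auto
    then show "padd p x y k = 0" unfolding padd_def by simp
  qed
  then show ?thesis unfolding Qp_def padd_def using pdigit_lt by auto
qed

lemma psub_Qp: "x \<in> Qp p \<Longrightarrow> c \<in> Qp p \<Longrightarrow> psub p x c \<in> Qp p"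
  unfolding psub_def using padd_Qp pneg_Qp by blast

end

locale hg = haar + gfun
begin

definition Rv :: "int \<Rightarrow> real" where "Rv j = (\<Sum>k. cc (j - int k) * real p powi (j - int k))"

lemma Rv_summable: "summable (\<lambda>k. cc (j - int k) * real p powi (j - int k))"
proof (rule summable_comparison_test'[of "\<lambda>k. real p powi j * (1 / real p) ^ k" 0])
  show "summable (\<lambda>k. real p powi j * (1 / real p) ^ k)"
    using P_gt1 by (intro summable_mult summable_geometric) simp
  fix k :: nat
  have "real p powi (j - int k) = real p powi j * (1 / real p) ^ k"
    using Ppow_add[of j "- int k"] by (simp add: power_int_minus power_one_over inverse_eq_divide)
  then show "norm (cc (j - int k) * real p powi (j - int k)) \<le> real p powi j * (1 / real p) ^ k"
    using cc_nonneg[of "j - int k"] cc_le1[of "j - int k"] Ppow_pos[of "j - int k"]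
    by (simp add: abs_mult mult_left_le_one_le)
qed

lemma rho_val:
  assumes zQ: "z \<in> Qp p" and znz: "z \<noteq> pzero" and st: "s = \<sigma> * t"
  shows "prho \<mu> p b \<sigma> t z = Rv (pval z)"
proof -
  interpret rl: rho_loc p \<mu> z s b
    by unfold_locales (use zQ znz s_pos b_pos in auto)
  have "rl.Phi y = pchi p (pmul p z y) * complex_of_real (exp (- \<sigma> * t * pabs p y powr b))" for y
    unfolding rl.Phi_def rl.F_def rl.gy_def using st by (simp add: mult_ac)
  then have "prho \<mu> p b \<sigma> t z = Re (\<integral>y. rl.Phi y \<partial>\<mu>)"
    unfolding prho_def by simp
  also have "\<dots> = rl.Sdown" using rl.Phi_integral by simp
  finally show ?thesis unfolding rl.Sdown_def Rv_def .
qed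

lemma rho_sub:
  assumes "y \<in> Qp p" "c \<in> Qp p" "y j \<noteq> c j" "\<forall>i<j. y i = c i" "s = \<sigma> * t"
  shows "prho \<mu> p b \<sigma> t (psub p y c) = Rv j"
  using rho_val[OF psub_Qp[OF assms(1,2)] pdist_first_diff(1)[OF assms(1-4)] assms(5)]
    pdist_first_diff(2)[OF assms(1-4)] by simp

lemma Rv_split:
  assumes "A \<le> j"
  shows "ennreal (Rv j) =
    (\<Sum>i. ennreal (cc (A + int i) * real p powi (A + int i)) * (if A + int i \<le> j then 1 else 0)) +
    (\<Sum>i. ennreal (cc (A - 1 - int i) * real p powi (A - 1 - int i)))"
proof -
  define f where "f k = ennreal (cc (j - int k) * real p powi (j - int k))" for k
  define n where "n = nat (j - A) + 1"
  have "ennreal (Rv j) = (\<Sum>k. f k)" unfolding Rv_def f_def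
    using cc_nonneg Ppow_pos by (intro suminf_ennreal2[symmetric] Rv_summable) (simp add: less_imp_le)
  also have "\<dots> = (\<Sum>k. f (k + n)) + (\<Sum>k<n. f k)" by (rule suminf_offset) simp
  also have "(\<Sum>k. f (k + n)) = (\<Sum>i. ennreal (cc (A - 1 - int i) * real p powi (A - 1 - int i)))"
  proof -
    have e: "j - int (k + n) = A - 1 - int k" for k unfolding n_def using assms by simp
    show ?thesis by (simp only: f_def e)
  qed
  also have "(\<Sum>k<n. f k) = (\<Sum>i<n. f (n - Suc i))" by (rule sum.nat_diff_reindex[symmetric])
  also have "\<dots> = (\<Sum>i<n. ennreal (cc (A + int i) * real p powi (A + int i)))"
  proof (rule sum.cong[OF refl])
    fix i assume "i \<in> {..<n}"
    then have "j - int (n - Suc i) = A + int i" unfolding n_def using assms by auto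
    then show "f (n - Suc i) = ennreal (cc (A + int i) * real p powi (A + int i))" unfolding f_def by simp
  qed
  also have "\<dots> = (\<Sum>i. ennreal (cc (A + int i) * real p powi (A + int i)) * (if A + int i \<le> j then 1 else 0))"
  proof -
    have "(A + int i \<le> j) \<longleftrightarrow> i < n" for i unfolding n_def using assms by auto
    then show ?thesis by (subst suminf_finite[of "{..<n}"]) auto
  qed
  finally show ?thesis by (simp add: add.commute)
qed

definition Sd :: "int \<Rightarrow> real" where "Sd A = (\<Sum>i. cc (A - 1 - int i) * real p powi (A - 1 - int i))"

lemma Sd_summable: "summable (\<lambda>i. cc (A - 1 - int i) * real p powi (A - 1 - int i))"
  using Rv_summable[of "A - 1"] by simp

lemma Sd_nonneg: "0 \<le> Sd A"
  unfolding Sd_def using cc_nonneg Ppow_pos by (intro suminf_nonneg Sd_summable) (simp add: less_imp_le)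

definition Ival :: "int \<Rightarrow> real" where "Ival A = g A + real p powi (- A) * Sd A"

lemma Ival_nonneg: "0 \<le> Ival A"
  unfolding Ival_def using g_pos[of A] Ppow_pos[of "-A"] Sd_nonneg[of A] by simp

lemma inner_integral:
  assumes c: "c \<in> cyl p pzero A" and st: "s = \<sigma> * t"
  shows "(\<integral>\<^sup>+ y. indicator (cyl p pzero A) y * ennreal (prho \<mu> p b \<sigma> t (psub p y c)) \<partial>\<mu>) = ennreal (Ival A)"
proof -
  have cq: "c \<in> Qp p" using c unfolding cyl_def by simp
  define a where "a i = ennreal (cc (A + int i) * real p powi (A + int i))" for i
  define SS where "SS = (\<Sum>i. ennreal (cc (A - 1 - int i) * real p powi (A - 1 - int i)))"
  have subc: "cyl p c (A + int i) \<subseteq> cyl p pzero A" for i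
    using c unfolding cyl_def agree_def by auto
  have pw: "indicator (cyl p pzero A) y * ennreal (prho \<mu> p b \<sigma> t (psub p y c)) =
      (\<Sum>i. a i * indicator (cyl p c (A + int i)) y) + SS * indicator (cyl p pzero A) y"
    if y: "y \<in> Qp p" "y \<noteq> c" for y
  proof (cases "y \<in> cyl p pzero A")
    case False
    then have "y \<notin> cyl p c (A + int i)" for i using subc by blast
    then show ?thesis using False by simp
  next
    case True
    obtain j where j: "y j \<noteq> c j" "\<forall>i<j. y i = c i" using first_diff[OF y(1) cq y(2)] by blast
    have Aj: "A \<le> j"
    proof (rule ccontr)
      assume "\<not> A \<le> j"
      then have "j < A" by simp
      then show False using True c j(1) unfolding cyl_def agree_def by auto
    qed
    have ind: "indicator (cyl p c (A + int i)) y = (if A + int i \<le> j then 1 else (0::ennreal))" for i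
    proof -
      have "agree (A + int i) y c \<longleftrightarrow> A + int i \<le> j"
        unfolding agree_def
      proof
        assume "\<forall>ja<A + int i. y ja = c ja" then show "A + int i \<le> j" using j(1) by (meson not_le)
      next
        assume "A + int i \<le> j" then show "\<forall>ja<A + int i. y ja = c ja" using j(2) by simp
      qed
      then show ?thesis using y(1) unfolding cyl_def by simp
    qed
    show ?thesis using True unfolding rho_sub[OF y(1) cq j st] Rv_split[OF Aj] ind a_def SS_def by simp
  qed
  have "(\<integral>\<^sup>+ y. indicator (cyl p pzero A) y * ennreal (prho \<mu> p b \<sigma> t (psub p y c)) \<partial>\<mu>) =
      (\<integral>\<^sup>+ y. (\<Sum>i. a i * indicator (cyl p c (A + int i)) y) + SS * indicator (cyl p pzero A) y \<partial>\<mu>)"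
  proof (rule nn_integral_cong_AE)
    show "AE y in \<mu>. indicator (cyl p pzero A) y * ennreal (prho \<mu> p b \<sigma> t (psub p y c)) =
        (\<Sum>i. a i * indicator (cyl p c (A + int i)) y) + SS * indicator (cyl p pzero A) y"
    proof (rule AE_I'[OF singleton_null[OF cq]], rule subsetI)
      fix x assume x: "x \<in> {x \<in> space \<mu>. \<not> (indicator (cyl p pzero A) x * ennreal (prho \<mu> p b \<sigma> t (psub p x c)) =
        (\<Sum>i. a i * indicator (cyl p c (A + int i)) x) + SS * indicator (cyl p pzero A) x)}"
      show "x \<in> {c}"
      proof (rule ccontr)
        assume "x \<notin> {c}"
        then have "x \<noteq> c" by simp
        then show False using pw[of x] x by simp
      qed
    qed
  qed
  also have "\<dots> = (\<Sum>i. a i * emeasure \<mu> (cyl p c (A + int i))) + SS * emeasure \<mu> (cyl p pzero A)"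
    by (subst nn_integral_add) (auto simp: nn_integral_suminf nn_integral_cmult)
  also have "(\<Sum>i. a i * emeasure \<mu> (cyl p c (A + int i))) = (\<Sum>i. ennreal (cc (A + int i)))"
  proof -
    have "a i * emeasure \<mu> (cyl p c (A + int i)) = ennreal (cc (A + int i))" for i
    proof -
      have "cc (A + int i) * real p powi (A + int i) * real p powi (- (A + int i)) = cc (A + int i)"
        using Ppow_add[of "A + int i" "- (A + int i)"] by simp
      then show ?thesis unfolding a_def cyl_meas[OF cq]
        using cc_nonneg Ppow_pos by (simp add: ennreal_mult[symmetric] less_imp_le mult.assoc)
    qed
    then show ?thesis by simp
  qed
  also have "(\<Sum>i. ennreal (cc (A + int i))) = ennreal (g A)"
  proof -
    have "(\<Sum>i. ennreal (cc (A + int i))) = ennreal (\<Sum>i. cc (A + int i))"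
      using sums_up[of A] cc_nonneg by (intro suminf_ennreal2) (auto simp: sums_iff)
    then show ?thesis using sums_up[of A] by (simp add: sums_iff)
  qed
  also have "SS = ennreal (Sd A)" unfolding SS_def Sd_def
    using cc_nonneg Ppow_pos by (intro suminf_ennreal2 Sd_summable) (simp add: less_imp_le)
  also have "ennreal (g A) + ennreal (Sd A) * emeasure \<mu> (cyl p pzero A) = ennreal (Ival A)"
  proof -
    have a1: "0 \<le> Sd A" "0 \<le> real p powi (- A)" "0 \<le> g A" using Sd_nonneg[of A] Ppow_pos[of "- A"] g_pos[of A] by auto
    have "ennreal (Sd A) * ennreal (real p powi (- A)) = ennreal (Sd A * real p powi (- A))"
      using a1 by (simp add: ennreal_mult)
    moreover have "ennreal (g A) + ennreal (Sd A * real p powi (- A)) = ennreal (g A + Sd A * real p powi (- A))"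
      using a1 by (intro ennreal_plus[symmetric]) auto
    ultimately show ?thesis unfolding cyl0_meas Ival_def by (simp only: mult.commute)
  qed
  finally show ?thesis .
qed

end


definition DD :: "(int \<Rightarrow> nat) \<Rightarrow> (int \<Rightarrow> nat) \<Rightarrow> int option" where
  "DD y c = (if y = c then None else Some (LEAST j. y j \<noteq> c j))"

context haar begin

lemma digit_sets: "{y \<in> Qp p. y k = e} \<in> sets \<mu>" using digit_borel by simp

lemma Ek_sets: "{x \<in> space (\<mu> \<Otimes>\<^sub>M \<mu>). fst x k = snd x k} \<in> sets (\<mu> \<Otimes>\<^sub>M \<mu>)"
proof -
  have "{x \<in> space (\<mu> \<Otimes>\<^sub>M \<mu>). fst x k = snd x k} =
      (\<Union>e\<in>{..<p}. {y \<in> Qp p. y k = e} \<times> {y \<in> Qp p. y k = e})"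
    using Qp_dig by (auto simp: space_pair_measure)
  also have "\<dots> \<in> sets (\<mu> \<Otimes>\<^sub>M \<mu>)"
    by (intro sets.finite_UN finite_lessThan ballI pair_measureI digit_sets)
  finally show ?thesis .
qed

lemma agree_sets: "{x \<in> space (\<mu> \<Otimes>\<^sub>M \<mu>). \<forall>k<j. fst x k = snd x k} \<in> sets (\<mu> \<Otimes>\<^sub>M \<mu>)"
proof -
  have "j - 1 \<in> {..<j}" by simp
  then have ne: "{..<j} \<noteq> {}" by blast
  have "{x \<in> space (\<mu> \<Otimes>\<^sub>M \<mu>). \<forall>k<j. fst x k = snd x k} =
      (\<Inter>k\<in>{..<j}. {x \<in> space (\<mu> \<Otimes>\<^sub>M \<mu>). fst x k = snd x k})"
    using \<open>j - 1 \<in> {..<j}\<close> by blast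
  also have "\<dots> \<in> sets (\<mu> \<Otimes>\<^sub>M \<mu>)"
    using ne Ek_sets by (intro sets.countable_INT) auto
  finally show ?thesis .
qed

lemma diag_sets: "{x \<in> space (\<mu> \<Otimes>\<^sub>M \<mu>). fst x = snd x} \<in> sets (\<mu> \<Otimes>\<^sub>M \<mu>)"
proof -
  have "{x \<in> space (\<mu> \<Otimes>\<^sub>M \<mu>). fst x = snd x} =
      (\<Inter>k\<in>(UNIV::int set). {x \<in> space (\<mu> \<Otimes>\<^sub>M \<mu>). fst x k = snd x k})"
    by auto
  also have "\<dots> \<in> sets (\<mu> \<Otimes>\<^sub>M \<mu>)"
    using Ek_sets by (intro sets.countable_INT) auto
  finally show ?thesis .
qed

lemma DD_meas: "(\<lambda>x. DD (fst x) (snd x)) \<in> measurable (\<mu> \<Otimes>\<^sub>M \<mu>) (count_space UNIV)"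
proof (subst measurable_count_space_eq2_countable, intro conjI ballI)
  show "(\<lambda>x. DD (fst x) (snd x)) \<in> space (\<mu> \<Otimes>\<^sub>M \<mu>) \<rightarrow> UNIV" by simp
  fix o' :: "int option"
  show "(\<lambda>x. DD (fst x) (snd x)) -` {o'} \<inter> space (\<mu> \<Otimes>\<^sub>M \<mu>) \<in> sets (\<mu> \<Otimes>\<^sub>M \<mu>)"
  proof (cases o')
    case None
    have "(\<lambda>x. DD (fst x) (snd x)) -` {o'} \<inter> space (\<mu> \<Otimes>\<^sub>M \<mu>) = {x \<in> space (\<mu> \<Otimes>\<^sub>M \<mu>). fst x = snd x}"
      unfolding None DD_def by (auto split: if_splits)
    then show ?thesis using diag_sets by simp
  next
    case (Some j)
    have "(\<lambda>x. DD (fst x) (snd x)) -` {o'} \<inter> space (\<mu> \<Otimes>\<^sub>M \<mu>) =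
      {x \<in> space (\<mu> \<Otimes>\<^sub>M \<mu>). \<forall>k<j. fst x k = snd x k} - {x \<in> space (\<mu> \<Otimes>\<^sub>M \<mu>). fst x j = snd x j}"
    proof (intro set_eqI iffI)
      fix x assume x: "x \<in> (\<lambda>x. DD (fst x) (snd x)) -` {o'} \<inter> space (\<mu> \<Otimes>\<^sub>M \<mu>)"
      then have ne: "fst x \<noteq> snd x" and L: "(LEAST j. fst x j \<noteq> snd x j) = j"
        unfolding Some DD_def by (auto split: if_splits)
      have sp: "fst x \<in> Qp p" "snd x \<in> Qp p" using x by (auto simp: space_pair_measure)
      obtain j0 where j0: "fst x j0 \<noteq> snd x j0" "\<forall>i<j0. fst x i = snd x i"
        using first_diff[OF sp ne] by blast
      have "(LEAST j. fst x j \<noteq> snd x j) = j0"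
      proof (rule Least_equality)
        show "fst x j0 \<noteq> snd x j0" by (rule j0(1))
        fix y assume "fst x y \<noteq> snd x y" then show "j0 \<le> y" using j0(2) by (meson not_le)
      qed
      then have "j0 = j" using L by simp
      then show "x \<in> {x \<in> space (\<mu> \<Otimes>\<^sub>M \<mu>). \<forall>k<j. fst x k = snd x k} - {x \<in> space (\<mu> \<Otimes>\<^sub>M \<mu>). fst x j = snd x j}"
        using j0 x by auto
    next
      fix x assume x: "x \<in> {x \<in> space (\<mu> \<Otimes>\<^sub>M \<mu>). \<forall>k<j. fst x k = snd x k} - {x \<in> space (\<mu> \<Otimes>\<^sub>M \<mu>). fst x j = snd x j}"
      then have ne: "fst x \<noteq> snd x" by auto
      have "(LEAST j. fst x j \<noteq> snd x j) = j"
      proof (rule Least_equality)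
        show "fst x j \<noteq> snd x j" using x by auto
        have xa: "\<forall>k<j. fst x k = snd x k" using x by simp
        fix y assume "fst x y \<noteq> snd x y" then show "j \<le> y" using xa by (meson not_le)
      qed
      then show "x \<in> (\<lambda>x. DD (fst x) (snd x)) -` {o'} \<inter> space (\<mu> \<Otimes>\<^sub>M \<mu>)"
        using x ne unfolding Some DD_def by auto
    qed
    then show ?thesis using agree_sets Ek_sets by (simp add: sets.Diff)
  qed
qed

end

context hg begin

lemma rho_DD:
  assumes y: "y \<in> Qp p" and c: "c \<in> Qp p" and st: "s = \<sigma> * h"
  shows "prho \<mu> p b \<sigma> h (psub p y c) = (case DD y c of None \<Rightarrow> prho \<mu> p b \<sigma> h pzero | Some j \<Rightarrow> Rv j)"
proof (cases "y = c")
  case True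
  then show ?thesis using psub_self[OF y] by (simp add: DD_def)
next
  case False
  obtain j where j: "y j \<noteq> c j" "\<forall>i<j. y i = c i" using first_diff[OF y c False] by blast
  have "(LEAST j. y j \<noteq> c j) = j"
  proof (rule Least_equality)
    show "y j \<noteq> c j" by (rule j(1))
    fix k assume "y k \<noteq> c k" then show "j \<le> k" using j(2) by (meson not_le)
  qed
  then show ?thesis using rho_sub[OF y c j st] False by (simp add: DD_def)
qed

lemma rho_pair_meas:
  assumes st: "s = \<sigma> * h"
  shows "(\<lambda>x. prho \<mu> p b \<sigma> h (psub p (fst x) (snd x))) \<in> borel_measurable (\<mu> \<Otimes>\<^sub>M \<mu>)"
proof -
  let ?H = "\<lambda>o'. case o' of None \<Rightarrow> prho \<mu> p b \<sigma> h pzero | Some j \<Rightarrow> Rv j"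
  have m: "(\<lambda>x. ?H (DD (fst x) (snd x))) \<in> borel_measurable (\<mu> \<Otimes>\<^sub>M \<mu>)"
    by (rule measurable_compose[OF DD_meas]) simp
  have e: "\<And>x. x \<in> space (\<mu> \<Otimes>\<^sub>M \<mu>) \<Longrightarrow>
      ?H (DD (fst x) (snd x)) = prho \<mu> p b \<sigma> h (psub p (fst x) (snd x))"
    using rho_DD[OF _ _ st] by (auto simp: space_pair_measure)
  show ?thesis by (rule measurable_cong[THEN iffD1, OF e m])
qed

lemma rho_comp_meas:
  assumes st: "s = \<sigma> * h" and f: "f1 \<in> measurable M \<mu>" and g: "f2 \<in> measurable M \<mu>"
  shows "(\<lambda>x. ennreal (prho \<mu> p b \<sigma> h (psub p (f1 x) (f2 x)))) \<in> borel_measurable M"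
proof -
  have "(\<lambda>x. prho \<mu> p b \<sigma> h (psub p (fst x) (snd x))) \<circ> (\<lambda>x. (f1 x, f2 x)) \<in> borel_measurable M"
    by (rule measurable_comp[OF measurable_Pair[OF f g] rho_pair_meas[OF st]])
  then show ?thesis by (simp add: comp_def)
qed

definition GG :: "real \<Rightarrow> real \<Rightarrow> int \<Rightarrow> nat \<Rightarrow> (nat \<Rightarrow> int \<Rightarrow> nat) \<Rightarrow> ennreal" where
  "GG \<sigma> h A k xs = indicator (PiE {..<k} (\<lambda>_. cyl p pzero A)) xs *
     (\<Prod>i<k. ennreal (prho \<mu> p b \<sigma> h (psub p (xs i) (if i = 0 then pzero else xs (i - 1)))))"

end


context hg begin

lemma GG_meas:
  assumes st: "s = \<sigma> * h"
  shows "GG \<sigma> h A k \<in> borel_measurable (PiM {..<k} (\<lambda>_. \<mu>))"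
  unfolding GG_def
proof (intro borel_measurable_times_ennreal borel_measurable_indicator borel_measurable_prod_ennreal)
  show "PiE {..<k} (\<lambda>_. cyl p pzero A) \<in> sets (PiM {..<k} (\<lambda>_. \<mu>))"
    by (intro sets_PiM_I_finite) auto
  fix i assume i: "i \<in> {..<k}"
  have f1: "(\<lambda>xs. xs i) \<in> measurable (PiM {..<k} (\<lambda>_. \<mu>)) \<mu>"
    using measurable_component_singleton[OF i, of "\<lambda>_. \<mu>"] by simp
  have f2: "(\<lambda>xs. if i = 0 then pzero else xs (i - 1)) \<in> measurable (PiM {..<k} (\<lambda>_. \<mu>)) \<mu>"
  proof (cases "i = 0")
    case True
    then show ?thesis using pzero_Qp by simp
  next
    case False
    then have "i - 1 \<in> {..<k}" using i by auto
    then show ?thesis using measurable_component_singleton[of "i - 1" "{..<k}" "\<lambda>_. \<mu>"] False by simp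
  qed
  show "(\<lambda>xs. ennreal (prho \<mu> p b \<sigma> h (psub p (xs i) (if i = 0 then pzero else xs (i - 1)))))
      \<in> borel_measurable (PiM {..<k} (\<lambda>_. \<mu>))"
    by (rule rho_comp_meas[OF st f1 f2])
qed

lemma GG_upd:
  assumes xs: "xs \<in> space (PiM {..<k} (\<lambda>_. \<mu>))"
  shows "GG \<sigma> h A (Suc k) (xs(k := y)) = GG \<sigma> h A k xs *
     (indicator (cyl p pzero A) y * ennreal (prho \<mu> p b \<sigma> h (psub p y (if k = 0 then pzero else xs (k - 1)))))"
proof -
  have ext: "xs \<in> extensional {..<k}" using xs by (simp add: space_PiM PiE_def)
  have ind: "indicator (PiE {..<Suc k} (\<lambda>_. cyl p pzero A)) (xs(k := y)) =
      (indicator (PiE {..<k} (\<lambda>_. cyl p pzero A)) xs * indicator (cyl p pzero A) y :: ennreal)"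
  proof -
    have "xs(k := y) \<in> PiE {..<Suc k} (\<lambda>_. cyl p pzero A) \<longleftrightarrow>
        xs \<in> PiE {..<k} (\<lambda>_. cyl p pzero A) \<and> y \<in> cyl p pzero A"
    proof
      assume a: "xs(k := y) \<in> PiE {..<Suc k} (\<lambda>_. cyl p pzero A)"
      have "xs i \<in> cyl p pzero A" if "i < k" for i
        using PiE_mem[OF a, of i] that by simp
      moreover have "y \<in> cyl p pzero A" using PiE_mem[OF a, of k] by simp
      ultimately show "xs \<in> PiE {..<k} (\<lambda>_. cyl p pzero A) \<and> y \<in> cyl p pzero A"
        using ext by (auto simp: PiE_def Pi_iff)
    next
      assume "xs \<in> PiE {..<k} (\<lambda>_. cyl p pzero A) \<and> y \<in> cyl p pzero A"
      then show "xs(k := y) \<in> PiE {..<Suc k} (\<lambda>_. cyl p pzero A)"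
        by (auto simp: PiE_def Pi_iff extensional_def less_Suc_eq)
    qed
    then show ?thesis by (simp add: indicator_def)
  qed
  have pr: "(\<Prod>i<Suc k. ennreal (prho \<mu> p b \<sigma> h (psub p ((xs(k := y)) i)
        (if i = 0 then pzero else (xs(k := y)) (i - 1))))) =
      (\<Prod>i<k. ennreal (prho \<mu> p b \<sigma> h (psub p (xs i) (if i = 0 then pzero else xs (i - 1))))) *
      ennreal (prho \<mu> p b \<sigma> h (psub p y (if k = 0 then pzero else xs (k - 1))))"
  proof -
    have "(\<Prod>i<k. ennreal (prho \<mu> p b \<sigma> h (psub p ((xs(k := y)) i)
        (if i = 0 then pzero else (xs(k := y)) (i - 1))))) =
      (\<Prod>i<k. ennreal (prho \<mu> p b \<sigma> h (psub p (xs i) (if i = 0 then pzero else xs (i - 1)))))"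
      by (intro prod.cong refl) auto
    moreover have "(if k = 0 then pzero else (xs(k := y)) (k - 1)) = (if k = 0 then pzero else xs (k - 1))"
      by auto
    ultimately show ?thesis by simp
  qed
  have "GG \<sigma> h A (Suc k) (xs(k := y)) =
     (indicator (PiE {..<k} (\<lambda>_. cyl p pzero A)) xs * indicator (cyl p pzero A) y) *
     ((\<Prod>i<k. ennreal (prho \<mu> p b \<sigma> h (psub p (xs i) (if i = 0 then pzero else xs (i - 1))))) *
      ennreal (prho \<mu> p b \<sigma> h (psub p y (if k = 0 then pzero else xs (k - 1)))))"
    by (simp only: GG_def ind pr)
  then show ?thesis unfolding GG_def by (simp only: mult.assoc mult.left_commute)
qed

lemma GG_prod:
  assumes st: "s = \<sigma> * h"
  shows "integral\<^sup>N (PiM {..<k} (\<lambda>_. \<mu>)) (GG \<sigma> h A k) = ennreal (Ival A) ^ k"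
proof (induction k)
  case 0
  have "GG \<sigma> h A 0 (\<lambda>_. undefined) = 1" unfolding GG_def by simp
  then show ?case by (simp add: PiM_empty nn_integral_count_space_finite)
next
  case (Suc k)
  interpret ps: product_sigma_finite "\<lambda>_::nat. \<mu>"
    by (intro product_sigma_finite.intro sigma_finite)
  have "integral\<^sup>N (PiM {..<Suc k} (\<lambda>_. \<mu>)) (GG \<sigma> h A (Suc k)) =
      integral\<^sup>N (PiM (insert k {..<k}) (\<lambda>_. \<mu>)) (GG \<sigma> h A (Suc k))"
    by (simp add: lessThan_Suc)
  also have "\<dots> = (\<integral>\<^sup>+ xs. \<integral>\<^sup>+ y. GG \<sigma> h A (Suc k) (xs(k := y)) \<partial>\<mu> \<partial>PiM {..<k} (\<lambda>_. \<mu>))"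
    by (rule ps.product_nn_integral_insert) (use GG_meas[OF st, of A "Suc k"] in \<open>auto simp: lessThan_Suc\<close>)
  also have "\<dots> = (\<integral>\<^sup>+ xs. GG \<sigma> h A k xs * ennreal (Ival A) \<partial>PiM {..<k} (\<lambda>_. \<mu>))"
  proof (rule nn_integral_cong)
    fix xs assume xs: "xs \<in> space (PiM {..<k} (\<lambda>_. \<mu>))"
    define c where "c = (if k = 0 then pzero else xs (k - 1))"
    have cq: "c \<in> Qp p"
    proof (cases "k = 0")
      case True then show ?thesis unfolding c_def using pzero_Qp by simp
    next
      case False
      then have "k - 1 \<in> {..<k}" by simp
      from PiE_mem[OF xs[unfolded space_PiM] this] show ?thesis unfolding c_def using False by simp
    qed
    have "(\<integral>\<^sup>+ y. GG \<sigma> h A (Suc k) (xs(k := y)) \<partial>\<mu>) =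
        (\<integral>\<^sup>+ y. GG \<sigma> h A k xs * (indicator (cyl p pzero A) y * ennreal (prho \<mu> p b \<sigma> h (psub p y c))) \<partial>\<mu>)"
      unfolding GG_upd[OF xs] c_def ..
    also have "\<dots> = GG \<sigma> h A k xs * (\<integral>\<^sup>+ y. indicator (cyl p pzero A) y * ennreal (prho \<mu> p b \<sigma> h (psub p y c)) \<partial>\<mu>)"
    proof (rule nn_integral_cmult)
      have "(\<lambda>y. ennreal (prho \<mu> p b \<sigma> h (psub p (id y) ((\<lambda>_. c) y)))) \<in> borel_measurable \<mu>"
        by (rule rho_comp_meas[OF st]) (use cq in auto)
      then show "(\<lambda>y. indicator (cyl p pzero A) y * ennreal (prho \<mu> p b \<sigma> h (psub p y c))) \<in> borel_measurable \<mu>"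
        by simp
    qed
    also have "\<dots> = GG \<sigma> h A k xs * ennreal (Ival A)"
    proof (cases "GG \<sigma> h A k xs = 0")
      case True then show ?thesis by simp
    next
      case False
      then have "xs \<in> PiE {..<k} (\<lambda>_. cyl p pzero A)" unfolding GG_def by (auto simp: indicator_def)
      then have "c \<in> cyl p pzero A" unfolding c_def using pzero_Qp by (auto simp: cyl_def agree_def)
      then show ?thesis using inner_integral[OF _ st] by simp
    qed
    finally show "(\<integral>\<^sup>+ y. GG \<sigma> h A (Suc k) (xs(k := y)) \<partial>\<mu>) = GG \<sigma> h A k xs * ennreal (Ival A)" .
  qed
  also have "\<dots> = integral\<^sup>N (PiM {..<k} (\<lambda>_. \<mu>)) (GG \<sigma> h A k) * ennreal (Ival A)"
    by (rule nn_integral_multc[OF GG_meas[OF st]])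
  also have "\<dots> = ennreal (Ival A) ^ Suc k" using Suc.IH by (simp add: mult.commute)
  finally show ?case .
qed

end


lemma limit_lemma:
  fixes I :: "nat \<Rightarrow> real" and c d :: real
  assumes c: "0 \<le> c" and d: "0 \<le> d"
    and lo: "\<And>N. N \<ge> 1 \<Longrightarrow> 1 - c / real N \<le> I N"
    and up: "\<And>N. N \<ge> 1 \<Longrightarrow> I N \<le> 1 - (c / real N) * (1 - d / real N)"
  shows "(\<lambda>N. I N ^ N) \<longlonglongrightarrow> exp (- c)"
proof (rule tendsto_sandwich)
  show "(\<lambda>N. (1 + (- c) / real N) ^ N) \<longlonglongrightarrow> exp (- c)" by (rule tendsto_exp_limit_sequentially)
  show "(\<lambda>N. exp (- c + c * d / real N)) \<longlonglongrightarrow> exp (- c)"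
  proof -
    have "(\<lambda>N. - c + c * d * (1 / real N)) \<longlonglongrightarrow> - c + c * d * 0"
      by (intro tendsto_intros lim_1_over_n)
    then have "(\<lambda>N. exp (- c + c * d * (1 / real N))) \<longlonglongrightarrow> exp (- c + c * d * 0)"
      by (rule tendsto_exp)
    then show ?thesis by simp
  qed
  obtain N0 :: nat where N0: "c < real N0" using reals_Archimedean2 by blast
  show "\<forall>\<^sub>F N in sequentially. (1 + (- c) / real N) ^ N \<le> I N ^ N"
  proof (rule eventually_sequentiallyI[of "max 1 N0"])
    fix N assume N: "max 1 N0 \<le> N"
    then have N1: "N \<ge> 1" and "real N0 \<le> real N" by auto
    then have "c / real N \<le> 1" using N0 by (simp add: divide_le_eq)
    then have "0 \<le> 1 + (- c) / real N" by simp
    then show "(1 + (- c) / real N) ^ N \<le> I N ^ N"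
      using lo[OF N1] by (intro power_mono) auto
  qed
  show "\<forall>\<^sub>F N in sequentially. I N ^ N \<le> exp (- c + c * d / real N)"
  proof (rule eventually_sequentiallyI[of "max 1 N0"])
    fix N assume N: "max 1 N0 \<le> N"
    then have N1: "N \<ge> 1" and "real N0 \<le> real N" by auto
    then have cN: "c / real N \<le> 1" using N0 by (simp add: divide_le_eq)
    define y where "y = (c / real N) * (1 - d / real N)"
    have "0 \<le> 1 - c / real N" using cN by simp
    then have I0: "0 \<le> I N" using lo[OF N1] by linarith
    have "I N \<le> 1 - y" using up[OF N1] unfolding y_def .
    also have "1 - y \<le> exp (- y)" using exp_ge_add_one_self[of "- y"] by simp
    finally have "I N ^ N \<le> exp (- y) ^ N" using I0 by (intro power_mono) auto
    also have "exp (- y) ^ N = exp (- (real N * y))" by (simp add: exp_of_nat_mult[symmetric])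
    also have "real N * y = c - c * d / real N" unfolding y_def using N1 by (simp add: field_simps)
    finally show "I N ^ N \<le> exp (- c + c * d / real N)" by simp
  qed
qed

lemma alg_a0:
  fixes U r t a c :: real
  assumes "(1 - r) * a = 1"
  shows "U * (1 - r) * (a - t * c) = U * (1 - t * (1 - r) * c)"
proof -
  have "U * (1 - r) * (a - t * c) = U * ((1 - r) * a) - U * t * (1 - r) * c" by (simp add: algebra_simps)
  also have "\<dots> = U - U * t * (1 - r) * c" by (simp only: assms mult_1_right)
  also have "\<dots> = U * (1 - t * (1 - r) * c)" by (simp add: algebra_simps)
  finally show ?thesis .
qed

lemma alg_aux:
  fixes U r t :: real
  assumes b: "1 - r \<noteq> 0" "1 - t * r \<noteq> 0"
  shows "U * (1 - r) * (1 / (1 - r) - t * (1 / (1 - t * r))) = U * (1 - t * (1 - r) / (1 - t * r))"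
proof -
  have "(1 - r) * (1 / (1 - r)) = 1" using b by simp
  from alg_a0[OF this, of U t "1 / (1 - t * r)"] show ?thesis by simp
qed

context gfun begin

lemma cc_upper: "cc m \<le> s * (u (m + 1) - u m)"
proof -
  define x where "x = s * u m"
  define y where "y = s * u (m + 1)"
  have xy: "0 \<le> x" "x \<le> y" unfolding x_def y_def using s_pos u_pos u_mono[of m "m+1"]
    by (auto intro: mult_left_mono less_imp_le)
  have "cc m = exp (- x) - exp (- y)" unfolding cc_def g_def x_def y_def by simp
  also have "\<dots> = exp (- x) * (1 - exp (- (y - x)))" by (simp add: algebra_simps exp_diff exp_minus field_simps)
  also have "\<dots> \<le> 1 * (y - x)"
  proof (rule mult_mono)
    show "exp (- x) \<le> 1" using xy by simp
    have "exp (- (y - x)) = exp (x - y)" by simp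
    then show "1 - exp (- (y - x)) \<le> y - x" using exp_ge_add_one_self[of "x - y"] by linarith
    show "0 \<le> 1 - exp (- (y - x))" using xy by simp
  qed simp
  finally show ?thesis unfolding x_def y_def by (simp add: algebra_simps)
qed

lemma cc_lower: "s * (u (m + 1) - u m) * (1 - s * u (m + 1)) \<le> cc m"
proof -
  define x where "x = s * u m"
  define y where "y = s * u (m + 1)"
  have xy: "0 \<le> x" "x \<le> y" unfolding x_def y_def using s_pos u_pos u_mono[of m "m+1"]
    by (auto intro: mult_left_mono less_imp_le)
  have "(y - x) * (1 - y) \<le> (y - x) * exp (- y)"
    using xy exp_ge_add_one_self[of "- y"] by (intro mult_left_mono) auto
  also have "\<dots> \<le> exp (- x) - exp (- y)"
  proof -
    have "1 + (y - x) \<le> exp (y - x)" by (rule exp_ge_add_one_self)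
    then have "exp (- y) * (1 + (y - x)) \<le> exp (- y) * exp (y - x)" by (intro mult_left_mono) auto
    also have "exp (- y) * exp (y - x) = exp (- x)" by (simp add: exp_add[symmetric])
    finally show ?thesis by (simp add: algebra_simps)
  qed
  also have "\<dots> = cc m" unfolding cc_def g_def x_def y_def by simp
  finally show ?thesis unfolding x_def y_def by (simp add: algebra_simps)
qed

definition Kc :: "int \<Rightarrow> real" where
  "Kc A = (\<Sum>i. (u (A - int i) - u (A - 1 - int i)) * (1 - real p powi (- 1 - int i)))"

lemma Kc_sums: "(\<lambda>i. (u (A - int i) - u (A - 1 - int i)) * (1 - real p powi (- 1 - int i))) sums
    (u A * (1 - (Q - 1) / (real p * Q - 1)))"
proof -
  have Q0: "0 < Q" using Q_gt1 by simp
  have P1: "1 < real p" by (rule P_gt1)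
  define r where "r = 1 / Q"
  define t where "t = 1 / real p"
  have r0: "0 < r" "r < 1" unfolding r_def using Q_gt1 by auto
  have t0: "0 < t" "t < 1" unfolding t_def using P1 by auto
  have e: "(u (A - int i) - u (A - 1 - int i)) * (1 - real p powi (- 1 - int i)) =
      u A * (1 - r) * (r ^ i - t * (t * r) ^ i)" for i
  proof -
    have "u (A - 1 - int i) = u A * r ^ Suc i" using u_sub[of A "Suc i"] unfolding r_def by (simp add: algebra_simps)
    moreover have "u (A - int i) = u A * r ^ i" unfolding r_def by (rule u_sub)
    moreover have "real p powi (- 1 - int i) = t ^ Suc i" unfolding t_def
      by (simp add: power_int_minus power_one_over inverse_eq_divide power_int_def nat_add_distrib)
    ultimately show ?thesis by (simp add: power_mult_distrib algebra_simps)
  qed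
  have g1: "(\<lambda>i. r ^ i) sums (1 / (1 - r))" using r0 by (intro geometric_sums) simp
  have g2: "(\<lambda>i. (t * r) ^ i) sums (1 / (1 - t * r))"
  proof (rule geometric_sums)
    have "t * r < 1 * 1" using r0 t0 by (intro mult_strict_mono) auto
    then show "norm (t * r) < 1" using r0 t0 by simp
  qed
  have fsum: "(\<lambda>i. u A * (1 - r) * (r ^ i - t * (t * r) ^ i)) sums
      (u A * (1 - r) * (1 / (1 - r) - t * (1 / (1 - t * r))))"
    by (intro sums_mult sums_diff g1 sums_mult g2)
  have eqv: "u A * (1 - r) * (1 / (1 - r) - t * (1 / (1 - t * r))) =
      u A * (1 - (Q - 1) / (real p * Q - 1))"
  proof -
    have "t * r < 1 * 1" using r0 t0 by (intro mult_strict_mono) auto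
    then have "t * r < 1" by simp
    have n1: "1 - r \<noteq> 0" "1 - t * r \<noteq> 0" using r0 \<open>t * r < 1\<close> by auto
    have n2: "real p * Q - 1 \<noteq> 0"
    proof -
      have "1 < real p * Q" using P1 Q_gt1 by (metis less_1_mult)
      then show ?thesis by simp
    qed
    have "u A * (1 - r) * (1 / (1 - r) - t * (1 / (1 - t * r))) = u A * (1 - t * (1 - r) / (1 - t * r))"
      using alg_aux[OF n1] .
    also have "t * (1 - r) / (1 - t * r) = (Q - 1) / (real p * Q - 1)"
      unfolding t_def r_def using Q0 P1 n2 by (simp add: field_simps)
    finally show ?thesis .
  qed
  show ?thesis unfolding e using fsum unfolding eqv .
qed

lemma Kc_eq: "Kc A = u A * (1 - (Q - 1) / (real p * Q - 1))"
  unfolding Kc_def using Kc_sums[of A] by (simp add: sums_iff)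

lemma Kc_nonneg: "0 \<le> Kc A"
proof -
  have "0 \<le> (u (A - int i) - u (A - 1 - int i)) * (1 - real p powi (- 1 - int i))" for i
  proof (rule mult_nonneg_nonneg)
    show "0 \<le> u (A - int i) - u (A - 1 - int i)" using u_mono[of "A - 1 - int i" "A - int i"] by simp
    have "real p powi (- 1 - int i) \<le> real p powi 0" by (rule Ppow_mono) simp
    then show "0 \<le> 1 - real p powi (- 1 - int i)" by simp
  qed
  then show ?thesis unfolding Kc_def using Kc_sums by (intro suminf_nonneg) (auto simp: sums_iff)
qed

end

context hg begin

lemma one_minus_Ival: "(\<lambda>i. cc (A - 1 - int i) * (1 - real p powi (- 1 - int i))) sums (1 - Ival A)"
proof -
  have s1: "(\<lambda>i. cc (A - 1 - int i)) sums (1 - g A)" using sums_down[of "A - 1"] by simp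
  have s2: "(\<lambda>i. cc (A - 1 - int i) * real p powi (A - 1 - int i) * real p powi (- A)) sums (Sd A * real p powi (- A))"
    unfolding Sd_def by (intro sums_mult2 summable_sums Sd_summable)
  have e: "cc (A - 1 - int i) * real p powi (A - 1 - int i) * real p powi (- A) = cc (A - 1 - int i) * real p powi (- 1 - int i)" for i
    using Ppow_add[of "A - 1 - int i" "- A"] by (simp add: mult.assoc)
  have "(\<lambda>i. cc (A - 1 - int i) - cc (A - 1 - int i) * real p powi (- 1 - int i)) sums ((1 - g A) - Sd A * real p powi (- A))"
    using sums_diff[OF s1 s2] unfolding e .
  then show ?thesis unfolding Ival_def by (simp add: algebra_simps)
qed

lemma Ival_upper_bound: "1 - Ival A \<le> s * Kc A"
proof -
  have gs: "(\<lambda>i. s * ((u (A - int i) - u (A - 1 - int i)) * (1 - real p powi (- 1 - int i)))) sums (s * Kc A)"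
    unfolding Kc_eq using Kc_sums by (intro sums_mult) 
  have pw: "cc (A - 1 - int i) * (1 - real p powi (- 1 - int i)) \<le>
       s * ((u (A - int i) - u (A - 1 - int i)) * (1 - real p powi (- 1 - int i)))" for i
  proof -
    have w: "0 \<le> 1 - real p powi (- 1 - int i)" using Ppow_mono[of "- 1 - int i" 0] by simp
    have "cc (A - 1 - int i) \<le> s * (u (A - int i) - u (A - 1 - int i))"
      using cc_upper[of "A - 1 - int i"] by simp
    then show ?thesis using w by (simp add: mult.assoc[symmetric] mult_right_mono)
  qed
  show ?thesis by (rule sums_le[OF pw one_minus_Ival gs])
qed

lemma Ival_lower_bound: "s * Kc A * (1 - s * u A) \<le> 1 - Ival A"
proof -
  have fs: "(\<lambda>i. (s * (1 - s * u A)) * ((u (A - int i) - u (A - 1 - int i)) * (1 - real p powi (- 1 - int i)))) sums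
      ((s * (1 - s * u A)) * Kc A)"
    unfolding Kc_eq using Kc_sums by (intro sums_mult)
  have pw: "(s * (1 - s * u A)) * ((u (A - int i) - u (A - 1 - int i)) * (1 - real p powi (- 1 - int i))) \<le>
      cc (A - 1 - int i) * (1 - real p powi (- 1 - int i))" for i
  proof -
    have w: "0 \<le> 1 - real p powi (- 1 - int i)" using Ppow_mono[of "- 1 - int i" 0] by simp
    have du: "0 \<le> u (A - int i) - u (A - 1 - int i)" using u_mono[of "A - 1 - int i" "A - int i"] by simp
    have "s * (u (A - int i) - u (A - 1 - int i)) * (1 - s * u A) \<le>
        s * (u (A - int i) - u (A - 1 - int i)) * (1 - s * u (A - int i))"
      using u_mono[of "A - int i" A] s_pos du by (intro mult_left_mono) (auto intro: mult_left_mono)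
    also have "\<dots> \<le> cc (A - 1 - int i)" using cc_lower[of "A - 1 - int i"] by simp
    finally show ?thesis using w by (metis mult.commute mult.left_commute mult_right_mono)
  qed
  have "(s * (1 - s * u A)) * Kc A \<le> 1 - Ival A" by (rule sums_le[OF pw fs one_minus_Ival])
  then show ?thesis by (simp add: mult_ac)
qed

end


context pp begin

lemma local_bound:
  assumes w: "\<omega> \<in> cadlag_paths p" and t: "0 \<le> t"
  shows "\<exists>\<delta>>0. \<exists>M. \<forall>s. 0 \<le> s \<and> \<bar>s - t\<bar> < \<delta> \<longrightarrow> pabs p (\<omega> s) \<le> M"
proof -
  have wq: "\<And>s. 0 \<le> s \<Longrightarrow> \<omega> s \<in> Qp p" using w unfolding cadlag_paths_def by auto
  have rc: "\<forall>e>0. \<exists>\<delta>>0. \<forall>s. t \<le> s \<and> s < t + \<delta> \<longrightarrow> pdist p (\<omega> s) (\<omega> t) < e"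
    using w t unfolding cadlag_paths_def by auto
  obtain d1 where d1: "d1 > 0" "\<forall>s. t \<le> s \<and> s < t + d1 \<longrightarrow> pdist p (\<omega> s) (\<omega> t) < 1"
    using rc[rule_format, of 1] by auto
  have right: "pabs p (\<omega> s) \<le> max (pabs p (\<omega> t)) 1" if "t \<le> s" "s < t + d1" for s
  proof -
    have "pdist p (\<omega> s) (\<omega> t) < real p powi (- (1 - 1))" using d1 that by simp
    then have "agree 1 (\<omega> s) (\<omega> t)" using pdist_less_agree wq t that by auto
    moreover have "\<omega> s \<in> Qp p" "\<omega> t \<in> Qp p" using wq t that by auto
    ultimately have "pabs p (\<omega> s) \<le> max (pabs p (\<omega> t)) (real p powi (- 1))"
      using agree_pabs by blast
    moreover have "real p powi (- 1) \<le> 1" using Ppow_mono[of "-1" 0] by simp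
    ultimately show ?thesis by linarith
  qed
  show ?thesis
  proof (cases "t = 0")
    case True
    have Mf: "\<forall>s. 0 \<le> s \<and> \<bar>s - t\<bar> < d1 \<longrightarrow> pabs p (\<omega> s) \<le> max (pabs p (\<omega> t)) 1"
      using right True by auto
    show ?thesis by (rule exI[of _ d1], rule conjI, rule d1(1), rule exI, rule Mf)
  next
    case False
    then have tp: "0 < t" using t by simp
    have lc: "\<forall>t>0. \<exists>L\<in>Qp p. \<forall>e>0. \<exists>\<delta>>0. \<forall>s. t - \<delta> < s \<and> s < t \<longrightarrow> pdist p (\<omega> s) L < e"
    proof -
      have "(\<forall>t. t < 0 \<longrightarrow> \<omega> t = pzero) \<and> (\<forall>t\<ge>0. \<omega> t \<in> Qp p) \<and>
     (\<forall>t\<ge>0. \<forall>e>0. \<exists>\<delta>>0. \<forall>s. t \<le> s \<and> s < t + \<delta> \<longrightarrow> pdist p (\<omega> s) (\<omega> t) < e) \<and>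
     (\<forall>t>0. \<exists>L\<in>Qp p. \<forall>e>0. \<exists>\<delta>>0. \<forall>s. t - \<delta> < s \<and> s < t \<longrightarrow> pdist p (\<omega> s) L < e)"
        using w unfolding cadlag_paths_def by (rule CollectD)
      then show ?thesis by (elim conjE)
    qed
    obtain L where L: "L \<in> Qp p" "\<forall>e>0. \<exists>\<delta>>0. \<forall>s. t - \<delta> < s \<and> s < t \<longrightarrow> pdist p (\<omega> s) L < e"
      using lc[rule_format, OF tp] by (elim bexE)
    obtain d2 where d2: "d2 > 0" "\<forall>s. t - d2 < s \<and> s < t \<longrightarrow> pdist p (\<omega> s) L < 1"
      using L(2)[rule_format, of 1] by auto
    have left: "pabs p (\<omega> s) \<le> max (pabs p L) 1" if "0 \<le> s" "t - d2 < s" "s < t" for s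
    proof -
      have "pdist p (\<omega> s) L < real p powi (- (1 - 1))" using d2 that by simp
      then have "agree 1 (\<omega> s) L" using pdist_less_agree wq L(1) that by auto
      moreover have "\<omega> s \<in> Qp p" using wq that by auto
      ultimately have "pabs p (\<omega> s) \<le> max (pabs p L) (real p powi (- 1))"
        using agree_pabs L(1) by blast
      moreover have "real p powi (- 1) \<le> 1" using Ppow_mono[of "-1" 0] by simp
      ultimately show ?thesis by linarith
    qed
    have Mf: "\<forall>s. 0 \<le> s \<and> \<bar>s - t\<bar> < min d1 d2 \<longrightarrow>
        pabs p (\<omega> s) \<le> max (max (pabs p (\<omega> t)) 1) (max (pabs p L) 1)"
    proof (intro allI impI)
      fix s assume s: "0 \<le> s \<and> \<bar>s - t\<bar> < min d1 d2"
      show "pabs p (\<omega> s) \<le> max (max (pabs p (\<omega> t)) 1) (max (pabs p L) 1)"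
      proof (cases "t \<le> s")
        case True
        then show ?thesis using right[OF True] s by auto
      next
        case False
        then show ?thesis using left[of s] s by auto
      qed
    qed
    have m0: "0 < min d1 d2" using d1 d2 by simp
    show ?thesis by (rule exI[of _ "min d1 d2"], rule conjI, rule m0, rule exI, rule Mf)
  qed
qed

lemma cadlag_bdd:
  assumes w: "\<omega> \<in> cadlag_paths p" and T: "0 \<le> T"
  shows "bdd_above ((\<lambda>t. pabs p (\<omega> t)) ` {0..T})"
proof -
  have "\<forall>t\<in>{0..T}. \<exists>d. d > 0 \<and> (\<exists>M. \<forall>s. 0 \<le> s \<and> \<bar>s - t\<bar> < d \<longrightarrow> pabs p (\<omega> s) \<le> M)"
    using local_bound[OF w] by auto
  then obtain d where d: "\<forall>t\<in>{0..T}. d t > 0 \<and> (\<exists>M. \<forall>s. 0 \<le> s \<and> \<bar>s - t\<bar> < d t \<longrightarrow> pabs p (\<omega> s) \<le> M)"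
    by (metis bchoice)
  then have "\<forall>t\<in>{0..T}. \<exists>M. \<forall>s. 0 \<le> s \<and> \<bar>s - t\<bar> < d t \<longrightarrow> pabs p (\<omega> s) \<le> M" by blast
  then obtain M where M: "\<forall>t\<in>{0..T}. \<forall>s. 0 \<le> s \<and> \<bar>s - t\<bar> < d t \<longrightarrow> pabs p (\<omega> s) \<le> M t"
    by (metis bchoice)
  have cov: "{0..T} \<subseteq> (\<Union>t\<in>{0..T}. ball t (d t))" using d by force
  obtain K where K: "K \<subseteq> {0..T}" "finite K" "{0..T} \<subseteq> (\<Union>t\<in>K. ball t (d t))"
    using compactE_image[OF compact_Icc[of 0 T], of "{0..T}" "\<lambda>t. ball t (d t)"] cov by auto
  have Kne: "K \<noteq> {}" using K(3) T by auto
  show ?thesis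
  proof (rule bdd_aboveI2)
    fix s assume s: "s \<in> {0..T}"
    then obtain t where t: "t \<in> K" "s \<in> ball t (d t)" using K(3) by blast
    have "pabs p (\<omega> s) \<le> M t" using M t K(1) s by (auto simp: dist_real_def abs_minus_commute)
    also have "M t \<le> Max (M ` K)" using t K(2) by simp
    finally show "pabs p (\<omega> s) \<le> Max (M ` K)" .
  qed
qed

end


context haar begin

lemma Ival_limit:
  assumes sg: "0 < \<sigma>" and bp: "0 < b" and Tp: "0 < T"
  shows "(\<lambda>N. hg.Ival p (\<sigma> * (T / real N)) b A ^ N) \<longlonglongrightarrow> exp (- (\<sigma> * T * gfun.Kc p b A))"
proof (rule limit_lemma[where d = "\<sigma> * T * gfun.u p b A"])
  interpret g1: gfun p 1 b by unfold_locales (use p2 bp in auto)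
  show "0 \<le> \<sigma> * T * gfun.Kc p b A" using g1.Kc_nonneg sg Tp by simp
  show "0 \<le> \<sigma> * T * gfun.u p b A" using g1.u_pos[of A] sg Tp by simp
next
  fix N :: nat assume N: "N \<ge> 1"
  interpret h: hg p \<mu> "\<sigma> * (T / real N)" b
    by unfold_locales (use p2 bp sg Tp N haar in auto)
  have "1 - h.Ival A \<le> \<sigma> * (T / real N) * h.Kc A" by (rule h.Ival_upper_bound)
  then show "1 - \<sigma> * T * gfun.Kc p b A / real N \<le> hg.Ival p (\<sigma> * (T / real N)) b A"
    by (simp add: field_simps)
next
  fix N :: nat assume N: "N \<ge> 1"
  interpret h: hg p \<mu> "\<sigma> * (T / real N)" b
    by unfold_locales (use p2 bp sg Tp N haar in auto)
  have "\<sigma> * (T / real N) * h.Kc A * (1 - \<sigma> * (T / real N) * h.u A) \<le> 1 - h.Ival A"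
    by (rule h.Ival_lower_bound)
  then show "hg.Ival p (\<sigma> * (T / real N)) b A \<le>
      1 - \<sigma> * T * gfun.Kc p b A / real N * (1 - \<sigma> * T * gfun.u p b A / real N)"
    by (simp add: field_simps)
qed

end

theorem theorem3p1:
  fixes p :: nat and b \<sigma> T :: real and a :: int
    and \<mu> :: "(int \<Rightarrow> nat) measure" and P :: "(real \<Rightarrow> int \<Rightarrow> nat) measure"
  assumes "prime p" and "0 < b" and "0 < \<sigma>"
    and "is_haar p \<mu>"
    and "is_padic_BM p b \<sigma> \<mu> P"
    and "0 \<le> T"
  shows "measure P {\<omega> \<in> space P. (SUP t\<in>{0..T}. pabs p (\<omega> t)) \<le> real p powr real_of_int a}
         = exp (- \<sigma> * (1 - (real p powr b - 1) / (real p powr (b + 1) - 1)) * T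
                  * real p powr (- real_of_int a * b))"
proof -
  have p2: "2 \<le> p" using assms(1) by (rule prime_ge_2_nat)
  interpret haar p \<mu> by unfold_locales (use p2 assms(4) in auto)
  have BM: "prob_space P" "space P = cadlag_paths p" "sets P = skorokhod_sets p"
    "AE \<omega> in P. \<omega> 0 = pzero"
    using assms(5) unfolding is_padic_BM_def by auto
  have fdd: "\<And>(k::nat) (ts::nat \<Rightarrow> real) (U::nat \<Rightarrow> (int \<Rightarrow> nat) set).
        1 \<le> k \<Longrightarrow> 0 < ts 0 \<Longrightarrow> (\<forall>i. Suc i < k \<longrightarrow> ts i < ts (Suc i)) \<Longrightarrow>
        (\<forall>i<k. U i \<in> padic_borel p) \<Longrightarrow>
        emeasure P {\<omega> \<in> space P. \<forall>i<k. \<omega> (ts i) \<in> U i} =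
        (\<integral>\<^sup>+ xs. indicator (PiE {..<k} U) xs *
            (\<Prod>i<k. ennreal (prho \<mu> p b \<sigma>
                 (ts i - (if i = 0 then 0 else ts (i - 1)))
                 (psub p (xs i) (if i = 0 then pzero else xs (i - 1)))))
          \<partial>(PiM {..<k} (\<lambda>_. \<mu>)))"
    using assms(5) unfolding is_padic_BM_def by blast
  interpret PP: prob_space P by (rule BM(1))
  define A where "A = - a"
  define B where "B = cyl p pzero A"
  have B_iff: "pabs p y \<le> real p powr real_of_int a \<longleftrightarrow> y \<in> B" if y: "y \<in> Qp p" for y
  proof -
    have "real p powr real_of_int a = real p powi (- A)"
      unfolding A_def using P_pos by (simp add: powr_real_of_int')
    then show ?thesis using pabs_le_iff[OF y, of A] y
      unfolding B_def cyl_def agree_def pzero_def by simp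
  qed
  have B_borel: "B \<in> padic_borel p" unfolding B_def by simp
  have pzB: "pzero \<in> B" unfolding B_def cyl_def agree_def using pzero_Qp by simp
  have gen: "{\<omega> \<in> space P. \<omega> t \<in> B} \<in> sets P" if t: "0 \<le> t" for t
    unfolding BM(2,3) skorokhod_sets_def
    by (rule sigma_sets.Basic) (use t B_borel in blast)
  have wq: "\<omega> t \<in> Qp p" if "\<omega> \<in> space P" "0 \<le> t" for \<omega> t
    using that unfolding BM(2) cadlag_paths_def by auto
  define S where "S = {\<omega> \<in> space P. (SUP t\<in>{0..T}. pabs p (\<omega> t)) \<le> real p powr real_of_int a}"
  have S_iff: "\<omega> \<in> S \<longleftrightarrow> (\<forall>t\<in>{0..T}. \<omega> t \<in> B)" if w: "\<omega> \<in> space P" for \<omega>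
  proof
    assume "\<omega> \<in> S"
    then have le: "(SUP t\<in>{0..T}. pabs p (\<omega> t)) \<le> real p powr real_of_int a" unfolding S_def by simp
    have bdd: "bdd_above ((\<lambda>t. pabs p (\<omega> t)) ` {0..T})"
      using cadlag_bdd[of \<omega> T] w assms(6) BM(2) by simp
    show "\<forall>t\<in>{0..T}. \<omega> t \<in> B"
    proof
      fix t assume t: "t \<in> {0..T}"
      have "pabs p (\<omega> t) \<le> (SUP t\<in>{0..T}. pabs p (\<omega> t))" by (rule cSUP_upper[OF t bdd])
      then have "pabs p (\<omega> t) \<le> real p powr real_of_int a" using le by linarith
      then show "\<omega> t \<in> B" using B_iff wq[OF w] t by auto
    qed
  next
    assume a: "\<forall>t\<in>{0..T}. \<omega> t \<in> B"
    have "(SUP t\<in>{0..T}. pabs p (\<omega> t)) \<le> real p powr real_of_int a"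
    proof (rule cSUP_least)
      show "{0..T} \<noteq> {}" using assms(6) by simp
      fix t assume t: "t \<in> {0..T}"
      then show "pabs p (\<omega> t) \<le> real p powr real_of_int a" using a B_iff wq[OF w] by auto
    qed
    then show "\<omega> \<in> S" unfolding S_def using w by simp
  qed
  show ?thesis
  proof (cases "T = 0")
    case True
    have Ssub: "S \<subseteq> space P" unfolding S_def by auto
    have SS: "S = {\<omega> \<in> space P. \<omega> 0 \<in> B}" using S_iff True Ssub by auto
    have "AE \<omega> in P. \<omega> \<in> S" using BM(4) AE_space[of P] unfolding SS by eventually_elim (use pzB in auto)
    then have "measure P S = 1" using PP.AE_in_set_eq_1[of S] gen[of 0] SS by simp
    then show ?thesis using True unfolding S_def by simp
  next
    case False
    then have Tp: "0 < T" using assms(6) by simp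
    define ts where "ts n i = real (i + 1) * T / 2 ^ n" for n i :: nat
    define G where "G n = {\<omega> \<in> space P. \<forall>i<2 ^ n. \<omega> (ts n i) \<in> B}" for n :: nat
    have ts_pos: "0 < ts n i" for n i unfolding ts_def using Tp by simp
    have G_sets: "G n \<in> sets P" for n
    proof -
      have z: "(0::nat) \<in> {..<2 ^ n}" by simp
      have "G n = (\<Inter>i\<in>{..<2 ^ n}. {\<omega> \<in> space P. \<omega> (ts n i) \<in> B})"
        unfolding G_def using z by blast
      also have "\<dots> \<in> sets P"
      proof (rule sets.finite_INT)
        show "{..<(2::nat) ^ n} \<noteq> {}" using z by blast
        fix i show "{\<omega> \<in> space P. \<omega> (ts n i) \<in> B} \<in> sets P" using gen ts_pos by (simp add: less_imp_le)
      qed simp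
      finally show ?thesis .
    qed
    have G_dec: "decseq G"
      unfolding decseq_Suc_iff
    proof
      fix n show "G (Suc n) \<subseteq> G n"
      proof
        fix \<omega> assume w: "\<omega> \<in> G (Suc n)"
        have "\<omega> (ts n i) \<in> B" if i: "i < 2 ^ n" for i
        proof -
          have "ts n i = ts (Suc n) (2 * i + 1)" unfolding ts_def by (simp add: field_simps)
          moreover have "2 * i + 1 < 2 ^ Suc n" using i by simp
          ultimately show ?thesis using w unfolding G_def by auto
        qed
        then show "\<omega> \<in> G n" using w unfolding G_def by auto
      qed
    qed
    have S_eq: "S = (\<Inter>n. G n)"
    proof (intro set_eqI iffI)
      fix \<omega> assume w: "\<omega> \<in> S"
      then have ws: "\<omega> \<in> space P" unfolding S_def by simp
      have "\<forall>t\<in>{0..T}. \<omega> t \<in> B" using S_iff[OF ws] w by simp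
      moreover have "ts n i \<in> {0..T}" if "i < 2 ^ n" for n i
      proof -
        have "i + 1 \<le> 2 ^ n" using that by simp
        then have "real (i + 1) \<le> real (2 ^ n)" by (rule of_nat_mono)
        then have "real (i + 1) \<le> 2 ^ n" by simp
        then have "real (i + 1) * T \<le> 2 ^ n * T" using Tp by (intro mult_right_mono) auto
        then have "real (i + 1) * T / 2 ^ n \<le> T" by (simp add: divide_le_eq mult.commute)
        then show ?thesis using ts_pos[of n i] unfolding ts_def by auto
      qed
      ultimately show "\<omega> \<in> (\<Inter>n. G n)" unfolding G_def using ws by auto
    next
      fix \<omega> assume w: "\<omega> \<in> (\<Inter>n. G n)"
      then have ws: "\<omega> \<in> space P" unfolding G_def by auto
      have "\<omega> t \<in> B" if t: "t \<in> {0..T}" for t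
      proof (cases "t = T")
        case True
        have "ts 0 0 = T" unfolding ts_def by simp
        then show ?thesis using w True unfolding G_def by force
      next
        case False
        then have tT: "t < T" "0 \<le> t" using t by auto
        have wc: "\<omega> \<in> cadlag_paths p" using ws BM(2) by simp
        have rc: "\<forall>e>0. \<exists>\<delta>>0. \<forall>s. t \<le> s \<and> s < t + \<delta> \<longrightarrow> pdist p (\<omega> s) (\<omega> t) < e"
          using wc tT unfolding cadlag_paths_def by auto
        obtain \<delta> where d: "\<delta> > 0" "\<forall>s. t \<le> s \<and> s < t + \<delta> \<longrightarrow> pdist p (\<omega> s) (\<omega> t) < real p powi (- (A - 1))"
          using rc[rule_format, OF Ppow_pos] by blast
        obtain n where n: "(1 / 2) ^ n < \<delta> / T" using real_arch_pow_inv[of "\<delta> / T" "1/2"] d Tp by auto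
        have hT: "T / 2 ^ n < \<delta>" using n Tp by (simp add: field_simps power_one_over)
        define i where "i = nat \<lfloor>t * 2 ^ n / T\<rfloor>"
        have fl0: "0 \<le> \<lfloor>t * 2 ^ n / T\<rfloor>" using tT Tp by simp
        have "real i \<le> t * 2 ^ n / T" "t * 2 ^ n / T < real i + 1"
          unfolding i_def using fl0 by linarith+
        then have i1: "real i * T \<le> t * 2 ^ n" and i2: "t * 2 ^ n < (real i + 1) * T"
          using Tp by (simp_all add: field_simps)
        have ilt: "i < 2 ^ n"
        proof -
          have "real i * T \<le> t * 2 ^ n" by (rule i1)
          also have "\<dots> < T * 2 ^ n" using tT by simp
          finally have "real i < 2 ^ n" using Tp by (simp add: mult.commute)
          then show ?thesis by (metis of_nat_less_iff of_nat_numeral of_nat_power)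
        qed
        have s1: "t \<le> ts n i" unfolding ts_def using i2 by (simp add: field_simps less_imp_le)
        have s2: "ts n i < t + \<delta>"
        proof -
          have "ts n i = real i * T / 2 ^ n + T / 2 ^ n" unfolding ts_def by (simp add: field_simps)
          also have "real i * T / 2 ^ n \<le> t" using i1 by (simp add: field_simps)
          finally show ?thesis using hT by simp
        qed
        have "pdist p (\<omega> (ts n i)) (\<omega> t) < real p powi (- (A - 1))" using d(2) s1 s2 by blast
        then have ag: "agree A (\<omega> (ts n i)) (\<omega> t)"
          using pdist_less_agree wq[OF ws] ts_pos[of n i] tT by (simp add: less_imp_le)
        have "\<omega> (ts n i) \<in> B" using w ilt unfolding G_def by auto
        then show ?thesis using ag wq[OF ws tT(2)] unfolding B_def cyl_def agree_def by auto
      qed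
      then show "\<omega> \<in> S" using S_iff[OF ws] by simp
    qed
    define I where "I N = hg.Ival p (\<sigma> * (T / real N)) b A" for N :: nat
    have meas_G: "measure P (G n) = I (2 ^ n) ^ (2 ^ n)" for n
    proof -
      define k :: nat where "k = 2 ^ n"
      define h where "h = T / real k"
      have hpos: "0 < h" unfolding h_def k_def using Tp by simp
      interpret H: hg p \<mu> "\<sigma> * h" b by unfold_locales (use p2 assms(2,3) hpos haar in auto)
      have "emeasure P (G n) = emeasure P {\<omega> \<in> space P. \<forall>i<k. \<omega> (ts n i) \<in> (\<lambda>_. B) i}"
        unfolding G_def k_def by simp
      also have "\<dots> = (\<integral>\<^sup>+ xs. indicator (PiE {..<k} (\<lambda>_. B)) xs *
            (\<Prod>i<k. ennreal (prho \<mu> p b \<sigma>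
                 (ts n i - (if i = 0 then 0 else ts n (i - 1)))
                 (psub p (xs i) (if i = 0 then pzero else xs (i - 1)))))
          \<partial>(PiM {..<k} (\<lambda>_. \<mu>)))"
      proof (rule fdd)
        show "1 \<le> k" unfolding k_def by simp
        show "0 < ts n 0" by (rule ts_pos)
        show "\<forall>i. Suc i < k \<longrightarrow> ts n i < ts n (Suc i)" unfolding ts_def using Tp by (simp add: divide_strict_right_mono)
        show "\<forall>i<k. (\<lambda>_. B) i \<in> padic_borel p" using B_borel by simp
      qed
      also have "\<dots> = integral\<^sup>N (PiM {..<k} (\<lambda>_. \<mu>)) (H.GG \<sigma> h A k)"
      proof (rule nn_integral_cong)
        fix xs
        have "ts n i - (if i = 0 then 0 else ts n (i - 1)) = h" for i
          unfolding ts_def h_def k_def by (cases i) (simp_all add: field_simps)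
        then show "indicator (PiE {..<k} (\<lambda>_. B)) xs *
            (\<Prod>i<k. ennreal (prho \<mu> p b \<sigma>
                 (ts n i - (if i = 0 then 0 else ts n (i - 1)))
                 (psub p (xs i) (if i = 0 then pzero else xs (i - 1))))) = H.GG \<sigma> h A k xs"
          unfolding H.GG_def B_def by simp
      qed
      also have "\<dots> = ennreal (H.Ival A) ^ k" by (rule H.GG_prod) simp
      also have "\<dots> = ennreal (H.Ival A ^ k)" using H.Ival_nonneg by (simp add: ennreal_power)
      finally have "emeasure P (G n) = ennreal (H.Ival A ^ k)" .
      then have "measure P (G n) = H.Ival A ^ k" using H.Ival_nonneg by (simp add: measure_def)
      then show ?thesis unfolding I_def k_def h_def by simp
    qed
    have lim1: "(\<lambda>n. measure P (G n)) \<longlonglongrightarrow> measure P S"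
      unfolding S_eq using PP.finite_Lim_measure_decseq[of G] G_sets G_dec by auto
    have lim2: "(\<lambda>n. measure P (G n)) \<longlonglongrightarrow> exp (- (\<sigma> * T * gfun.Kc p b A))"
    proof -
      have "(\<lambda>N. I N ^ N) \<longlonglongrightarrow> exp (- (\<sigma> * T * gfun.Kc p b A))"
        unfolding I_def by (rule Ival_limit[OF assms(3,2) Tp])
      then have "((\<lambda>N. I N ^ N) \<circ> (\<lambda>n. 2 ^ n)) \<longlonglongrightarrow> exp (- (\<sigma> * T * gfun.Kc p b A))"
        by (rule LIMSEQ_subseq_LIMSEQ) (simp add: strict_mono_def)
      then show ?thesis unfolding meas_G by (simp add: comp_def)
    qed
    have "measure P S = exp (- (\<sigma> * T * gfun.Kc p b A))" using LIMSEQ_unique[OF lim1 lim2] .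
    also have "- (\<sigma> * T * gfun.Kc p b A) = - \<sigma> * (1 - (real p powr b - 1) / (real p powr (b + 1) - 1)) * T
                  * real p powr (- real_of_int a * b)"
    proof -
      interpret g1: gfun p 1 b by unfold_locales (use p2 assms(2) in auto)
      have "gfun.Kc p b A = g1.u A * (1 - (g1.Q - 1) / (real p * g1.Q - 1))" by (rule g1.Kc_eq)
      moreover have "g1.u A = real p powr (- real_of_int a * b)" unfolding g1.u_def A_def by simp
      moreover have "real p powr (b + 1) = real p * g1.Q" unfolding g1.Q_def
        using P_pos by (simp add: powr_add)
      moreover have "g1.Q = real p powr b" unfolding g1.Q_def ..
      ultimately show ?thesis by (simp add: mult_ac)
    qed
    finally show ?thesis unfolding S_def .
  qed
qed


end
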